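(* Let $n\geq 1$ and $i\in[n-1]$. Then \[\Lambda(n,i)+\Lambda(n,i+1)= L_2(n,i),\] except when $n$ is even and $n+i\equiv 2\pmod 4$, in which case \[\Lambda(n,i)+\Lambda(n,i+1)= L_2(n,i)+L_2\Big(\frac n2,\frac i2\Big).\]
   Context: $\mathcal C_n^{+-}$ is the set of cyclic permutations $\pi=\pi_1\cdots\pi_n$ of $[n]$ (those consisting of a single $n$-cycle) that are unimodal, i.e. for which there is $e\in\{0,\dots,n\}$ with $\pi_1\cdots\pi_e$ increasing and $\pi_{e+1}\cdots\pi_n$ decreasing. $\Lambda(n,i)$ is the number of $\pi\in\mathcal C_n^{+-}$ with $\pi_i=n$ (peak at position $i$). $L_2(m,j)$ is the number of primitive binary necklaces (binary Lyndon words) of length $m$ with exactly $j$ ones, where a word is primitive if it is not of the form $q^r$ with $r>1$. *)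

theory Defs
  imports "HOL-Combinatorics.Permutations"
begin

definition cyclic_perm :: "nat \<Rightarrow> (nat \<Rightarrow> nat) \<Rightarrow> bool" where
  "cyclic_perm n \<pi> \<longleftrightarrow> \<pi> permutes {1..n} \<and>
     (\<forall>x\<in>{1..n}. \<exists>k. (\<pi> ^^ k) 1 = x)"

definition unimodal :: "nat \<Rightarrow> (nat \<Rightarrow> nat) \<Rightarrow> bool" where
  "unimodal n \<pi> \<longleftrightarrow> (\<exists>e\<le>n.
     (\<forall>a b. 1 \<le> a \<and> a < b \<and> b \<le> e \<longrightarrow> \<pi> a < \<pi> b) \<and>
     (\<forall>a b. e + 1 \<le> a \<and> a < b \<and> b \<le> n \<longrightarrow> \<pi> a > \<pi> b))"

definition Lambda :: "nat \<Rightarrow> nat \<Rightarrow> nat" where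
  "Lambda n i = card {\<pi>. cyclic_perm n \<pi> \<and> unimodal n \<pi> \<and> \<pi> i = n}"

definition primitive_word :: "'a list \<Rightarrow> bool" where
  "primitive_word w \<longleftrightarrow> \<not> (\<exists>q r. r > 1 \<and> w = concat (replicate r q))"

definition necklace :: "'a list \<Rightarrow> 'a list set" where
  "necklace w = {rotate k w | k. True}"

definition L2 :: "nat \<Rightarrow> nat \<Rightarrow> nat" where
  "L2 m j = card (necklace ` {w :: bool list. length w = m \<and> count_list w True = j \<and> primitive_word w})"

end

theory Submission
  imports Defs
begin


fun cF :: "(nat \<Rightarrow> bool) \<Rightarrow> nat \<Rightarrow> nat" where
  "cF f 0 = 0"
| "cF f (Suc k) = cF f k + (if f k then 0 else 1)"

lemma cF_cong: "(\<And>j. j < k \<Longrightarrow> f j = g j) \<Longrightarrow> cF f k = cF g k"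
  by (induction k) auto

lemma cF_shift: "cF f (Suc k) = (if f 0 then 0 else 1) + cF (\<lambda>j. f (Suc j)) k"
  by (induction k) auto

lemma cF_count: "k \<le> length a \<Longrightarrow> cF ((!) a) k = count_list (take k a) False"
  by (induction k) (auto simp: take_Suc_conv_app_nth)

definition tless :: "bool list \<Rightarrow> bool list \<Rightarrow> bool" where
  "tless a b \<longleftrightarrow> length a = length b \<and>
     (\<exists>k<length a. (\<forall>j<k. a!j = b!j) \<and> a!k \<noteq> b!k \<and> a!k = even (cF ((!) a) k))"

lemma tless_irrefl: "\<not> tless a a"
  by (auto simp: tless_def)

lemma tless_asym: assumes "tless a b" shows "\<not> tless b a"
proof
  assume "tless b a"
  from assms obtain k1 where k1: "k1 < length a" "\<forall>j<k1. a!j = b!j" "a!k1 \<noteq> b!k1"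
      "a!k1 = even (cF ((!) a) k1)" unfolding tless_def by blast
  from \<open>tless b a\<close> obtain k2 where k2: "\<forall>j<k2. b!j = a!j" "b!k2 \<noteq> a!k2"
      "b!k2 = even (cF ((!) b) k2)" unfolding tless_def by blast
  have "k1 = k2" using k1 k2 by (metis linorder_neqE_nat)
  moreover have "cF ((!) a) k1 = cF ((!) b) k1" using k1 by (intro cF_cong) auto
  ultimately show False using k1 k2 by auto
qed

lemma tless_trans: assumes "tless a b" "tless b c" shows "tless a c"
proof -
  from assms(1) obtain k1 where k1: "k1 < length a" "\<forall>j<k1. a!j = b!j" "a!k1 \<noteq> b!k1"
      "a!k1 = even (cF ((!) a) k1)" and l1: "length a = length b" unfolding tless_def by blast
  from assms(2) obtain k2 where k2: "k2 < length b" "\<forall>j<k2. b!j = c!j" "b!k2 \<noteq> c!k2"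
      "b!k2 = even (cF ((!) b) k2)" and l2: "length b = length c" unfolding tless_def by blast
  have c12: "cF ((!) a) k = cF ((!) b) k" if "k \<le> k1" for k
    using k1 that by (intro cF_cong) auto
  consider "k1 < k2" | "k2 < k1" | "k1 = k2" by linarith
  then show ?thesis
  proof cases
    case 1
    then show ?thesis using k1 k2 l1 l2 unfolding tless_def
      by (intro conjI exI[of _ k1]) auto
  next
    case 2
    then show ?thesis using k1 k2 l1 l2 c12[of k2] unfolding tless_def
      by (intro conjI exI[of _ k2]) auto
  next
    case 3
    then show ?thesis using k1 k2 c12[of k1] by auto
  qed
qed

lemma first_diff:
  assumes "length a = length b" "a \<noteq> b"
  shows "\<exists>k<length a. (\<forall>j<k. a!j = b!j) \<and> a!k \<noteq> b!k"
proof -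
  have "\<exists>k. k < length a \<and> a!k \<noteq> b!k" using assms nth_equalityI by blast
  define k where "k = (LEAST k. k < length a \<and> a!k \<noteq> b!k)"
  have k1: "k < length a \<and> a!k \<noteq> b!k" unfolding k_def by (rule LeastI_ex) fact
  have k2: "a!j = b!j" if "j < k" for j
    using not_less_Least[of j "\<lambda>k. k < length a \<and> a!k \<noteq> b!k"] that k1 unfolding k_def by auto
  show ?thesis using k1 k2 by blast
qed

lemma tless_total:
  assumes "length a = length b" "a \<noteq> b"
  shows "tless a b \<or> tless b a"
proof -
  obtain k where k: "k<length a" "\<forall>j<k. a!j = b!j" "a!k \<noteq> b!k" using first_diff[OF assms] by blast
  have "cF ((!) a) k = cF ((!) b) k" using k by (intro cF_cong) auto
  then show ?thesis using k assms(1) unfolding tless_def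
    by (cases "a!k = even (cF ((!) a) k)") (auto intro!: exI[of _ k])
qed

lemma count_card: "count_list xs y = card {j. j < length xs \<and> xs!j = y}"
proof -
  have "count_list xs y = card {j. j<length xs \<and> y = xs!j}"
    by (simp add: count_list_eq_length_filter length_filter_conv_card)
  also have "{j. j<length xs \<and> y = xs!j} = {j. j < length xs \<and> xs!j = y}" by auto
  finally show ?thesis .
qed

lemma mono_card_lt:
  fixes g :: "nat \<Rightarrow> nat"
  assumes fin: "finite F" and bij: "bij_betw g F F'"
    and mono: "\<And>x y. x \<in> F \<Longrightarrow> y \<in> F \<Longrightarrow> x < y \<Longrightarrow> g x < g y" and x: "x \<in> F"
  shows "card {y\<in>F. y < x} = card {z\<in>F'. z < g x}"
proof -
  have "g ` {y\<in>F. y < x} = {z\<in>F'. z < g x}"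
  proof
    show "g ` {y \<in> F. y < x} \<subseteq> {z \<in> F'. z < g x}"
      using bij mono x by (auto simp: bij_betw_def)
    show "{z \<in> F'. z < g x} \<subseteq> g ` {y \<in> F. y < x}"
    proof
      fix z assume z: "z \<in> {z \<in> F'. z < g x}"
      then obtain y where y: "y \<in> F" "z = g y" using bij by (auto simp: bij_betw_def)
      have "y < x" using mono[OF x y(1)] y z by (metis (mono_tags) linorder_neqE_nat mem_Collect_eq not_less_iff_gr_or_eq)
      then show "z \<in> g ` {y \<in> F. y < x}" using y by auto
    qed
  qed
  moreover have "inj_on g {y\<in>F. y < x}" using bij by (auto simp: bij_betw_def inj_on_def)
  ultimately show ?thesis by (metis card_image)
qed

lemma anti_card_lt:
  fixes g :: "nat \<Rightarrow> nat"
  assumes fin: "finite F" and bij: "bij_betw g F F'"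
    and mono: "\<And>x y. x \<in> F \<Longrightarrow> y \<in> F \<Longrightarrow> x < y \<Longrightarrow> g y < g x" and x: "x \<in> F"
  shows "card {y\<in>F. y < x} = card {z\<in>F'. g x < z}"
proof -
  have "g ` {y\<in>F. y < x} = {z\<in>F'. g x < z}"
  proof
    show "g ` {y \<in> F. y < x} \<subseteq> {z \<in> F'. g x < z}"
      using bij mono x by (auto simp: bij_betw_def)
    show "{z \<in> F'. g x < z} \<subseteq> g ` {y \<in> F. y < x}"
    proof
      fix z assume z: "z \<in> {z \<in> F'. g x < z}"
      then obtain y where y: "y \<in> F" "z = g y" using bij by (auto simp: bij_betw_def)
      have "\<not> x < y"
      proof
        assume "x < y" then have "g y < g x" using mono x y(1) by blast
        then show False using y z by simp
      qed
      moreover have "y \<noteq> x" using y z by auto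
      ultimately have "y < x" by linarith
      then show "z \<in> g ` {y \<in> F. y < x}" using y by auto
    qed
  qed
  moreover have "inj_on g {y\<in>F. y < x}" using bij by (auto simp: bij_betw_def inj_on_def)
  ultimately show ?thesis by (metis card_image)
qed

lemma card_lt_inj:
  assumes "finite F" "a \<in> F" "b \<in> F" "card {z\<in>F. z < a} = card {z\<in>F. z < b}"
  shows "a = (b::nat)"
proof (rule ccontr)
  assume "a \<noteq> b"
  then consider "a < b" | "b < a" by linarith
  then show False
  proof cases
    case 1
    have "{z\<in>F. z < a} \<subset> {z\<in>F. z < b}" using 1 assms(2) by auto
    from psubset_card_mono[OF _ this] assms(1,4) show False by simp
  next
    case 2
    have "{z\<in>F. z < b} \<subset> {z\<in>F. z < a}" using 2 assms(3) by auto
    from psubset_card_mono[OF _ this] assms(1,4) show False by simp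
  qed
qed

lemma card_gt_inj:
  assumes "finite F" "a \<in> F" "b \<in> F" "card {z\<in>F. a < z} = card {z\<in>F. b < z}"
  shows "a = (b::nat)"
proof (rule ccontr)
  assume "a \<noteq> b"
  then consider "a < b" | "b < a" by linarith
  then show False
  proof cases
    case 1
    have "{z\<in>F. b < z} \<subset> {z\<in>F. a < z}" using 1 assms(3) by auto
    from psubset_card_mono[OF _ this] assms(1,4) show False by simp
  next
    case 2
    have "{z\<in>F. a < z} \<subset> {z\<in>F. b < z}" using 2 assms(2) by auto
    from psubset_card_mono[OF _ this] assms(1,4) show False by simp
  qed
qed

lemma mono_self_id:
  assumes fin: "finite F" and gF: "\<And>x. x \<in> F \<Longrightarrow> g x \<in> F"
    and mono: "\<And>x y. x \<in> F \<Longrightarrow> y \<in> F \<Longrightarrow> x < y \<Longrightarrow> g x < g y" and x: "x \<in> F"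
  shows "g x = (x::nat)"
proof -
  have inj: "inj_on g F" using mono by (metis inj_onI linorder_neqE_nat less_irrefl)
  have "g ` F = F" using endo_inj_surj[OF fin _ inj] gF by auto
  then have bij: "bij_betw g F F" using inj by (simp add: bij_betw_def)
  have "card {y\<in>F. y < x} = card {z\<in>F. z < g x}" by (rule mono_card_lt[OF fin bij mono x])
  then show ?thesis using card_lt_inj[OF fin gF[OF x] x] by simp
qed

lemma anti_self_inv:
  assumes fin: "finite F" and gF: "\<And>x. x \<in> F \<Longrightarrow> g x \<in> F"
    and mono: "\<And>x y. x \<in> F \<Longrightarrow> y \<in> F \<Longrightarrow> x < y \<Longrightarrow> g y < g x" and x: "x \<in> F"
  shows "g (g x) = (x::nat)"
proof -
  have "(g \<circ> g) x = x"
  proof (rule mono_self_id[OF fin])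
    show "(g \<circ> g) y \<in> F" if "y \<in> F" for y using gF that by simp
    show "(g \<circ> g) y < (g \<circ> g) z" if "y \<in> F" "z \<in> F" "y < z" for y z
      using mono[OF that] mono gF that by simp
  qed fact
  then show ?thesis by simp
qed


lemma rotate_mult: "rotate k w = w \<Longrightarrow> rotate (k * x) w = w"
proof (induction x)
  case (Suc x)
  have "rotate (k * Suc x) w = rotate k (rotate (k*x) w)" by (simp add: rotate_rotate add.commute)
  then show ?case using Suc by simp
qed simp

lemma rotate_gcd:
  assumes "rotate k w = w" "0 < k"
  shows "rotate (gcd k (length w)) w = w"
proof -
  obtain x y where xy: "k * x = length w * y + gcd k (length w)" using bezout_nat[of k "length w"] assms by auto
  have "rotate (k*x) w = w" using rotate_mult[OF assms(1)] .
  moreover have "rotate (k*x) w = rotate (gcd k (length w)) w"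
  proof -
    have "rotate (k*x) w = rotate ((length w * y + gcd k (length w)) mod length w) w"
      using xy rotate_conv_mod[of "k*x" w] by simp
    also have "\<dots> = rotate (gcd k (length w) mod length w) w" by simp
    also have "\<dots> = rotate (gcd k (length w)) w" by (simp add: rotate_conv_mod[symmetric])
    finally show ?thesis .
  qed
  ultimately show ?thesis by simp
qed

lemma rotate_period_nth:
  assumes "rotate d w = w" "0 < d" "j < length w"
  shows "w ! j = w ! (j mod d)"
  using assms(3)
proof (induction j rule: less_induct)
  case (less j)
  show ?case
  proof (cases "j < d")
    case True then show ?thesis by simp
  next
    case False
    have "w ! (j - d) = rotate d w ! (j - d)" using assms by simp
    also have "\<dots> = w ! ((d + (j - d)) mod length w)" using less.prems by (intro nth_rotate) auto
    also have "\<dots> = w ! j" using False less.prems by simp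
    finally have "w ! j = w ! (j - d)" by simp
    also have "\<dots> = w ! ((j - d) mod d)" using less.IH[of "j-d"] False assms less.prems by auto
    also have "(j - d) mod d = j mod d" using False by (simp add: mod_if le_mod_geq)
    finally show ?thesis .
  qed
qed

lemma nth_concat_replicate:
  "j < r * length q \<Longrightarrow> concat (replicate r q) ! j = q ! (j mod length q)"
proof (induction r arbitrary: j)
  case (Suc r)
  show ?case
  proof (cases "j < length q")
    case True then show ?thesis by (simp add: nth_append)
  next
    case False
    then have "concat (replicate (Suc r) q) ! j = concat (replicate r q) ! (j - length q)"
      by (simp add: nth_append)
    also have "\<dots> = q ! ((j - length q) mod length q)" using Suc False by auto
    also have "(j - length q) mod length q = j mod length q" using False by (simp add: le_mod_geq)
    finally show ?thesis .
  qed
qed simp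

lemma rotate_period_concat:
  assumes "rotate d w = w" "0 < d" "d dvd length w"
  shows "w = concat (replicate (length w div d) (take d w))"
proof (rule nth_equalityI)
  show "length w = length (concat (replicate (length w div d) (take d w)))"
  proof (cases "w = []")
    case False
    then have "d \<le> length w" using assms by (intro dvd_imp_le) auto
    then show ?thesis using assms by (simp add: length_concat sum_list_replicate min_def)
  qed simp
  fix j assume j: "j < length w"
  have "d \<le> length w" using j assms by (intro dvd_imp_le) auto
  then have lt: "length (take d w) = d" by simp
  have "concat (replicate (length w div d) (take d w)) ! j = take d w ! (j mod d)"
    using nth_concat_replicate[of j "length w div d" "take d w"] lt j assms by simp
  also have "\<dots> = w ! (j mod d)" using assms by simp
  finally show "w ! j = concat (replicate (length w div d) (take d w)) ! j"
    using rotate_period_nth[OF assms(1,2) j] by simp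
qed

lemma rotate_concat_replicate:
  "rotate (length q) (concat (replicate r q)) = concat (replicate r q)"
proof (cases r)
  case (Suc r')
  have "concat (replicate r q) = q @ concat (replicate r' q)" using Suc by simp
  then have "rotate (length q) (concat (replicate r q)) = concat (replicate r' q) @ q"
    by (simp add: rotate_append)
  also have "\<dots> = concat (replicate r q)" using Suc by (simp add: replicate_append_same[symmetric])
  finally show ?thesis .
qed simp

lemma nonprim_rotate:
  assumes "\<not> primitive_word w" "w \<noteq> []"
  shows "\<exists>k. 0 < k \<and> k < length w \<and> rotate k w = w"
proof -
  obtain q r where qr: "r > 1" "w = concat (replicate r q)" using assms unfolding primitive_word_def by blast
  have lw: "length w = r * length q" using qr by (simp add: length_concat sum_list_replicate)
  then have "length q > 0" using assms by (cases "length q") auto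
  then have "length q < length w" using lw qr by simp
  then show ?thesis using rotate_concat_replicate qr \<open>length q > 0\<close> by metis
qed

lemma prim_rotate:
  assumes "primitive_word w" "0 < k" "k < length w"
  shows "rotate k w \<noteq> w"
proof
  assume r: "rotate k w = w"
  let ?d = "gcd k (length w)"
  have d: "rotate ?d w = w" using rotate_gcd[OF r assms(2)] .
  have d0: "0 < ?d" using assms by simp
  have dle: "?d \<le> k" using assms by (simp add: gcd_le1_nat)
  have "w = concat (replicate (length w div ?d) (take ?d w))"
    by (rule rotate_period_concat[OF d d0]) simp
  moreover have "length w div ?d > 1"
  proof -
    have lt: "?d < length w" using dle assms(3) by linarith
    obtain c where c: "length w = ?d * c" by (metis gcd_dvd2 dvdE)
    then have "length w div ?d = c" using d0 by (metis nonzero_mult_div_cancel_left not_gr0)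
    moreover have "c \<noteq> 0" using c lt by (cases c) auto
    moreover have "c \<noteq> 1"
    proof
      assume "c = 1" with c lt show False by simp
    qed
    ultimately show ?thesis by linarith
  qed
  ultimately show False using assms(1) unfolding primitive_word_def by blast
qed

lemma necklace_rotate: "necklace (rotate k w) = necklace w"
proof -
  have "necklace (rotate k w) \<subseteq> necklace w" unfolding necklace_def by (auto simp: rotate_rotate)
  moreover have "necklace w \<subseteq> necklace (rotate k w)"
  proof
    fix v assume "v \<in> necklace w"
    then obtain j where v: "v = rotate j w" unfolding necklace_def by auto
    show "v \<in> necklace (rotate k w)"
    proof (cases "w = []")
      case True then show ?thesis using v unfolding necklace_def by auto
    next
      case False
      let ?l = "length w"
      have "rotate (j + (?l - k mod ?l)) (rotate k w) = rotate (j + (?l - k mod ?l) + k) w" by (simp add: rotate_rotate)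
      also have "\<dots> = rotate ((j + (?l - k mod ?l) + k) mod ?l) w" by (rule rotate_conv_mod)
      also have "(j + (?l - k mod ?l) + k) mod ?l = j mod ?l"
      proof -
        have "k mod ?l < ?l" using False by simp
        have "k = ?l * (k div ?l) + k mod ?l" by simp
        moreover have "?l * (k div ?l + 1) = ?l + ?l * (k div ?l)" by (simp add: algebra_simps)
        ultimately have "j + (?l - k mod ?l) + k = j + ?l * (k div ?l + 1)"
          using \<open>k mod ?l < ?l\<close> by linarith
        then show ?thesis by (simp only: mod_mult_self2)
      qed
      also have "rotate (j mod ?l) w = v" using v by (simp add: rotate_conv_mod[symmetric])
      finally show ?thesis unfolding necklace_def by auto
    qed
  qed
  ultimately show ?thesis by blast
qed

lemma necklace_lt: assumes ne: "w \<noteq> []" shows "necklace w = (\<lambda>k. rotate k w) ` {..<length w}"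
proof
  show "necklace w \<subseteq> (\<lambda>k. rotate k w) ` {..<length w}"
  proof
    fix v assume "v \<in> necklace w"
    then obtain k where "v = rotate k w" unfolding necklace_def by auto
    then have "v = rotate (k mod length w) w" using rotate_conv_mod by metis
    moreover have "k mod length w < length w" using ne by simp
    ultimately show "v \<in> (\<lambda>k. rotate k w) ` {..<length w}" by blast
  qed
  show "(\<lambda>k. rotate k w) ` {..<length w} \<subseteq> necklace w" unfolding necklace_def by auto
qed

lemma rotate_inj_prim:
  assumes "primitive_word w" "a < length w" "b < length w" "rotate a w = rotate b w"
  shows "a = b"
proof (rule ccontr)
  assume "a \<noteq> b"
  { fix a b assume ab: "a < b" "b < length w" "rotate a w = rotate b w"
    have "rotate (length w - a) (rotate b w) = rotate ((length w - a + b) mod length w) w"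
      by (simp add: rotate_rotate rotate_conv_mod[of "length w - a + b"])
    also have "(length w - a + b) mod length w = b - a"
    proof -
      have eq: "length w - a + b = (b - a) + length w" using ab by linarith
      have "(length w - a + b) mod length w = ((b - a) + length w) mod length w" by (simp only: eq)
      also have "\<dots> = (b - a) mod length w" by (simp only: mod_add_self2)
      also have "\<dots> = b - a" using ab by simp
      finally show ?thesis .
    qed
    finally have 1: "rotate (length w - a) (rotate b w) = rotate (b - a) w" .
    have 2: "rotate (length w - a) (rotate a w) = w" using ab(1,2) by (simp add: rotate_rotate)
    have "rotate (b - a) w = w" by (metis 1 2 ab(3))
    then have False using prim_rotate[OF assms(1), of "b - a"] ab by simp }
  then show False using assms \<open>a \<noteq> b\<close> by (metis linorder_neqE_nat)
qed

lemma card_necklace_prim: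
  assumes "primitive_word w" "w \<noteq> []"
  shows "card (necklace w) = length w"
proof -
  have "inj_on (\<lambda>k. rotate k w) {..<length w}" using rotate_inj_prim[OF assms(1)] by (auto simp: inj_on_def)
  then show ?thesis using necklace_lt[OF assms(2)] by (simp add: card_image)
qed


locale lp =
  fixes n e :: nat and f :: "nat \<Rightarrow> nat"
  assumes n2: "2 \<le> n" and en: "e \<le> n" and perm: "f permutes {1..n}"
    and cyc: "\<forall>x\<in>{1..n}. \<exists>k. (f ^^ k) 1 = x"
    and inc: "\<And>a b. 1 \<le> a \<Longrightarrow> a < b \<Longrightarrow> b \<le> e \<Longrightarrow> f a < f b"
    and dec: "\<And>a b. e + 1 \<le> a \<Longrightarrow> a < b \<Longrightarrow> b \<le> n \<Longrightarrow> f b < f a"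
begin

lemma fin: "x \<in> {1..n} \<Longrightarrow> f x \<in> {1..n}"
  using permutes_in_image[OF perm] by simp

lemma powin: "x \<in> {1..n} \<Longrightarrow> (f^^k) x \<in> {1..n}"
proof (induction k)
  case (Suc k)
  have "(f^^Suc k) x = f ((f^^k) x)" by simp
  then show ?case using fin[OF Suc.IH[OF Suc.prems]] by (simp only:)
qed simp

lemma injf: "inj f" using permutes_inj[OF perm] .

lemma injpow: "inj (f^^k)" using injf by simp

lemma one_in: "1 \<in> {1..n}" using n2 by simp

lemma pow_cancel: assumes "a < b" "(f^^a) x = (f^^b) x" shows "(f^^(b-a)) x = x"
proof -
  have "(f^^b) x = (f^^(a + (b-a))) x" using assms by simp
  also have "\<dots> = (f^^a) ((f^^(b-a)) x)" by (simp only: funpow_add o_apply)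
  finally have "(f^^a) x = (f^^a) ((f^^(b-a)) x)" using assms(2) by simp
  from injD[OF injpow this] show ?thesis by simp
qed

lemma exists_ret: "\<exists>k. 0 < k \<and> k \<le> n \<and> (f^^k) 1 = 1"
proof -
  have "\<not> inj_on (\<lambda>k. (f^^k) 1) {0..n}"
  proof
    assume "inj_on (\<lambda>k. (f^^k) 1) {0..n}"
    then have "card ((\<lambda>k. (f^^k) 1) ` {0..n}) = n+1" by (simp add: card_image)
    moreover have "(\<lambda>k. (f^^k) 1) ` {0..n} \<subseteq> {1..n}" using powin one_in by auto
    ultimately show False using card_mono[of "{1..n}" "(\<lambda>k. (f^^k) 1) ` {0..n}"] by simp
  qed
  then obtain a b where ab: "a \<in> {0..n}" "b \<in> {0..n}" "a \<noteq> b" "(f^^a) 1 = (f^^b) 1"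
    unfolding inj_on_def by blast
  show ?thesis
  proof (cases "a < b")
    case True
    then show ?thesis using pow_cancel[OF True ab(4)] ab by (intro exI[of _ "b-a"]) auto
  next
    case False
    then have "b < a" using ab by simp
    then show ?thesis using pow_cancel[OF \<open>b<a\<close> ab(4)[symmetric]] ab by (intro exI[of _ "a-b"]) auto
  qed
qed

definition r where "r = (LEAST k. 0 < k \<and> (f^^k) 1 = 1)"

lemma r_props: "0 < r" "r \<le> n" "(f^^r) 1 = 1"
proof -
  obtain k where k: "0 < k" "k \<le> n" "(f^^k) 1 = 1" using exists_ret by blast
  have "0 < r \<and> (f^^r) 1 = 1" unfolding r_def by (rule LeastI[of _ k]) (use k in auto)
  moreover have "r \<le> k" unfolding r_def by (rule Least_le) (use k in auto)
  ultimately show "0 < r" "r \<le> n" "(f^^r) 1 = 1" using k by auto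
qed

lemma r_min: "0 < k \<Longrightarrow> k < r \<Longrightarrow> (f^^k) 1 \<noteq> 1"
  using not_less_Least[of k "\<lambda>k. 0 < k \<and> (f^^k) 1 = 1"] unfolding r_def by auto

lemma pow_mult_fix: "(f^^m) x = x \<Longrightarrow> (f^^(m*q)) x = x"
proof (induction q)
  case (Suc q)
  have "(f^^(m * Suc q)) x = (f^^m) ((f^^(m*q)) x)"
    by (simp add: funpow_add)
  then show ?case using Suc by simp
qed simp

lemma pow_mod_gen: assumes "(f^^m) x = x" shows "(f^^k) x = (f^^(k mod m)) x"
proof -
  have "k = k mod m + m * (k div m)" by simp
  then have "(f^^k) x = (f^^(k mod m)) ((f^^(m * (k div m))) x)"
    by (metis funpow_add o_apply)
  then show ?thesis using pow_mult_fix[OF assms] by simp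
qed

lemma r_eq: "r = n"
proof -
  have "{1..n} \<subseteq> (\<lambda>k. (f^^k) 1) ` {..<r}"
  proof
    fix x assume "x \<in> {1..n}"
    then obtain k where "(f^^k) 1 = x" using cyc by blast
    then have "(f^^(k mod r)) 1 = x" using pow_mod_gen[OF r_props(3)] by simp
    moreover have "k mod r < r" using r_props by simp
    ultimately show "x \<in> (\<lambda>k. (f^^k) 1) ` {..<r}" by blast
  qed
  then have "card {1..n} \<le> card ((\<lambda>k. (f^^k) 1) ` {..<r})" by (intro card_mono) auto
  also have "\<dots> \<le> r" using card_image_le[of "{..<r}"] by simp
  finally show ?thesis using r_props by simp
qed

lemma fn1: "(f^^n) 1 = 1" using r_props r_eq by simp

lemma nret: "0 < k \<Longrightarrow> k < n \<Longrightarrow> (f^^k) 1 \<noteq> 1" using r_min r_eq by simp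

lemma orbit: "x \<in> {1..n} \<Longrightarrow> \<exists>k<n. (f^^k) 1 = x"
proof -
  assume "x \<in> {1..n}"
  then obtain k where "(f^^k) 1 = x" using cyc by blast
  then have "(f^^(k mod n)) 1 = x" using pow_mod_gen[OF fn1] by simp
  then show ?thesis using n2 by (intro exI[of _ "k mod n"]) auto
qed

lemma fnx: assumes "x \<in> {1..n}" shows "(f^^n) x = x"
proof -
  obtain k where k: "(f^^k) 1 = x" using orbit[OF assms] by blast
  have "(f^^n) ((f^^k) 1) = (f^^(n+k)) 1" by (simp only: funpow_add o_apply)
  also have "\<dots> = (f^^(k+n)) 1" by (simp only: add.commute)
  also have "\<dots> = (f^^k) ((f^^n) 1)" by (simp only: funpow_add o_apply)
  finally have "(f^^n) ((f^^k) 1) = (f^^k) ((f^^n) 1)" .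
  then show ?thesis using k fn1 by simp
qed

lemma pmod: "x \<in> {1..n} \<Longrightarrow> (f^^j) x = (f^^(j mod n)) x"
  by (rule pow_mod_gen[OF fnx])

lemma inj_orbit: "inj_on (\<lambda>k. (f^^k) 1) {..<n}"
proof (rule inj_onI)
  fix a b assume ab: "a \<in> {..<n}" "b \<in> {..<n}" "(f^^a) 1 = (f^^b) 1"
  show "a = b"
  proof (rule ccontr)
    assume "a \<noteq> b"
    then consider "a < b" | "b < a" by linarith
    then show False
    proof cases
      case 1
      have "0 < b - a" "b - a < n" using 1 ab by auto
      then show False using pow_cancel[OF 1 ab(3)] nret by blast
    next
      case 2
      have "0 < a - b" "a - b < n" using 2 ab by auto
      then show False using pow_cancel[OF 2 ab(3)[symmetric]] nret by blast
    qed
  qed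
qed

lemma bij_orbit: "bij_betw (\<lambda>k. (f^^k) 1) {..<n} {1..n}"
  unfolding bij_betw_def
proof
  show "inj_on (\<lambda>k. (f^^k) 1) {..<n}" by (rule inj_orbit)
  show "(\<lambda>k. (f^^k) 1) ` {..<n} = {1..n}"
  proof
    show "(\<lambda>k. (f^^k) 1) ` {..<n} \<subseteq> {1..n}" using powin[OF one_in] by auto
    show "{1..n} \<subseteq> (\<lambda>k. (f^^k) 1) ` {..<n}"
    proof
      fix x assume "x \<in> {1..n}"
      then obtain k where "k < n" "(f^^k) 1 = x" using orbit by blast
      then show "x \<in> (\<lambda>k. (f^^k) 1) ` {..<n}" by blast
    qed
  qed
qed

subsection \<open>Itineraries\<close>

definition I :: "nat \<Rightarrow> nat \<Rightarrow> bool" where "I x j = ((f^^j) x \<le> e)"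
definition s :: "nat \<Rightarrow> bool list" where "s x = map (I x) [0..<n]"
definition w where "w = s 1"

lemma I_per: "x \<in> {1..n} \<Longrightarrow> I x j = I x (j mod n)"
  unfolding I_def using pmod by metis

lemma I_shift: "I (f x) j = I x (Suc j)"
  unfolding I_def by (simp add: funpow_swap1)

lemma I_shift_fun: "I (f x) = (\<lambda>j. I x (Suc j))"
  using I_shift by auto

lemma I_pow: "I ((f^^k) x) j = I x (j + k)"
  unfolding I_def by (simp add: funpow_add)

lemma I0: "I x 0 = (x \<le> e)" unfolding I_def by simp

lemma len_s[simp]: "length (s x) = n" unfolding s_def by simp

lemma s_nth: "j < n \<Longrightarrow> s x ! j = I x j" unfolding s_def by simp

lemma s_pow: assumes "x \<in> {1..n}" shows "s ((f^^k) x) = rotate k (s x)"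
proof (rule nth_equalityI)
  show "length (s ((f ^^ k) x)) = length (rotate k (s x))" by simp
  fix j assume "j < length (s ((f ^^ k) x))"
  then have j: "j < n" by simp
  have "rotate k (s x) ! j = s x ! ((k + j) mod n)" using j by (simp add: nth_rotate)
  also have "\<dots> = I x ((k+j) mod n)" using j n2 by (simp add: s_nth)
  also have "\<dots> = I x (j + k)" using I_per[OF assms, of "k+j"] by (simp add: add.commute)
  finally show "s ((f ^^ k) x) ! j = rotate k (s x) ! j" using j by (simp add: s_nth I_pow)
qed

lemma s_f: assumes "x \<in> {1..n}" shows "s (f x) = rotate1 (s x)"
  using s_pow[OF assms, of 1] by simp

lemma w_len[simp]: "length w = n" unfolding w_def by simp

lemma w_ne: "w \<noteq> []" using n2 w_len by (metis list.size(3) not_numeral_le_zero)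

lemma s_in: "x \<in> {1..n} \<Longrightarrow> s x \<in> necklace w"
proof -
  assume "x \<in> {1..n}"
  then obtain k where "(f^^k) 1 = x" using orbit by blast
  then have "s x = rotate k w" using s_pow[OF one_in, of k] w_def by simp
  then show ?thesis unfolding necklace_def by auto
qed

lemma s_image: "s ` {1..n} = necklace w"
proof
  show "s ` {1..n} \<subseteq> necklace w" using s_in by auto
  show "necklace w \<subseteq> s ` {1..n}"
  proof
    fix v assume "v \<in> necklace w"
    then obtain k where "v = rotate k w" unfolding necklace_def by auto
    then have "v = s ((f^^k) 1)" using s_pow[OF one_in, of k] w_def by simp
    then show "v \<in> s ` {1..n}" using powin[OF one_in] by blast
  qed
qed

lemma w_count: "count_list w True = e"
proof -
  have "count_list w True = card {j. j < n \<and> w!j = True}" using count_card[of w True] by simp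
  also have "{j. j < n \<and> w!j = True} = {j. j < n \<and> (f^^j) 1 \<le> e}"
    unfolding w_def by (auto simp: s_nth I_def)
  also have "card \<dots> = card ((\<lambda>j. (f^^j) 1) ` {j. j < n \<and> (f^^j) 1 \<le> e})"
    using inj_orbit by (intro card_image[symmetric]) (auto simp: inj_on_def)
  also have "(\<lambda>j. (f^^j) 1) ` {j. j < n \<and> (f^^j) 1 \<le> e} = {x \<in> {1..n}. x \<le> e}"
  proof
    show "(\<lambda>j. (f^^j) 1) ` {j. j < n \<and> (f^^j) 1 \<le> e} \<subseteq> {x \<in> {1..n}. x \<le> e}"
      using powin[OF one_in] by auto
    show "{x \<in> {1..n}. x \<le> e} \<subseteq> (\<lambda>j. (f^^j) 1) ` {j. j < n \<and> (f^^j) 1 \<le> e}"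
    proof
      fix x assume x: "x \<in> {x \<in> {1..n}. x \<le> e}"
      then obtain k where "k < n" "(f^^k) 1 = x" using orbit by blast
      then show "x \<in> (\<lambda>j. (f^^j) 1) ` {j. j < n \<and> (f^^j) 1 \<le> e}" using x by auto
    qed
  qed
  also have "{x \<in> {1..n}. x \<le> e} = {1..e}" using en by auto
  finally show ?thesis by simp
qed

lemma itin_mono:
  assumes "x \<in> {1..n}" "y \<in> {1..n}" "x < y" "\<forall>j<k. I x j = I y j" "I x k \<noteq> I y k"
  shows "I x k = even (cF (I x) k)"
  using assms
proof (induction k arbitrary: x y)
  case 0
  then show ?case by (auto simp: I0)
next
  case (Suc k)
  have e0: "I x 0 = I y 0" using Suc.prems by auto
  have fx: "f x \<in> {1..n}" "f y \<in> {1..n}" using fin Suc.prems by auto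
  have pre: "\<forall>j<k. I (f x) j = I (f y) j" using Suc.prems(4) by (auto simp: I_shift)
  have dk: "I (f x) k \<noteq> I (f y) k" using Suc.prems(5) by (simp add: I_shift)
  have cs: "cF (I x) (Suc k) = (if I x 0 then 0 else 1) + cF (I (f x)) k"
    by (simp only: cF_shift I_shift_fun)
  show ?case
  proof (cases "x \<le> e")
    case True
    then have "y \<le> e" using e0 by (simp add: I0)
    then have "f x < f y" using inc Suc.prems True by auto
    then have "I (f x) k = even (cF (I (f x)) k)" using Suc.IH[OF fx] pre dk by blast
    then show ?thesis using cs True by (simp add: I0 I_shift)
  next
    case False
    then have "\<not> y \<le> e" using e0 by (simp add: I0)
    then have "f y < f x" using dec Suc.prems False by auto
    then have "I (f y) k = even (cF (I (f y)) k)" using Suc.IH[OF fx(2) fx(1)] pre dk by auto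
    moreover have "cF (I (f y)) k = cF (I (f x)) k" using pre by (intro cF_cong) auto
    ultimately show ?thesis using cs False dk by (simp add: I0 I_shift)
  qed
qed

lemma s_mono:
  assumes "x \<in> {1..n}" "y \<in> {1..n}" "x < y" "s x \<noteq> s y"
  shows "tless (s x) (s y)"
proof -
  obtain k where k: "k < n" "\<forall>j<k. s x!j = s y!j" "s x!k \<noteq> s y!k"
    using first_diff[of "s x" "s y"] assms by auto
  have pre: "\<forall>j<k. I x j = I y j" using k by (auto simp: s_nth)
  have "I x k = even (cF (I x) k)" using itin_mono[OF assms(1-3) pre] k by (simp add: s_nth)
  moreover have "cF ((!) (s x)) k = cF (I x) k" using k by (intro cF_cong) (auto simp: s_nth)
  ultimately show ?thesis unfolding tless_def using k by (intro conjI exI[of _ k]) (auto simp: s_nth)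
qed

lemma s_le:
  assumes "x \<in> {1..n}" "y \<in> {1..n}" "x \<le> y"
  shows "s x = s y \<or> tless (s x) (s y)"
proof (cases "x = y")
  case False
  then have "x < y" using assms by simp
  then show ?thesis using s_mono[OF assms(1,2)] by blast
qed simp

lemma pow_mono:
  assumes "x \<in> {1..n}" "y \<in> {1..n}" "x < y" "\<forall>j<k. I x j = I y j"
  shows "if even (cF (I x) k) then (f^^k) x < (f^^k) y else (f^^k) y < (f^^k) x"
  using assms(4)
proof (induction k)
  case 0 then show ?case using assms by simp
next
  case (Suc k)
  let ?a = "(f^^k) x" and ?b = "(f^^k) y"
  have ab: "?a \<in> {1..n}" "?b \<in> {1..n}" using powin[OF assms(1)] powin[OF assms(2)] by blast+
  have a1: "1 \<le> ?a" "?a \<le> n" "1 \<le> ?b" "?b \<le> n" using ab by auto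
  have "\<forall>j<k. I x j = I y j" using Suc.prems by simp
  then have IH: "if even (cF (I x) k) then ?a < ?b else ?b < ?a" by (rule Suc.IH)
  have "I x k = I y k" using Suc.prems by simp
  then have lk: "(?a \<le> e) = (?b \<le> e)" unfolding I_def .
  have c: "cF (I x) (Suc k) = cF (I x) k + (if ?a \<le> e then 0 else 1)" by (simp add: I_def)
  have fS: "(f^^Suc k) x = f ?a" "(f^^Suc k) y = f ?b" by simp_all
  show ?case
  proof (cases "even (cF (I x) k)")
    case True
    then have ab1: "?a < ?b" using IH by simp
    show ?thesis
    proof (cases "?a \<le> e")
      case True
      then have "f ?a < f ?b" using inc[of ?a ?b] ab1 lk a1 by blast
      moreover have "even (cF (I x) (Suc k))" using c True \<open>even (cF (I x) k)\<close> by simp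
      ultimately show ?thesis unfolding fS by simp
    next
      case False
      then have "f ?b < f ?a" using dec[of ?a ?b] ab1 lk a1 by linarith
      moreover have "odd (cF (I x) (Suc k))" using c False \<open>even (cF (I x) k)\<close> by simp
      ultimately show ?thesis unfolding fS by simp
    qed
  next
    case False
    then have ab1: "?b < ?a" using IH by simp
    show ?thesis
    proof (cases "?a \<le> e")
      case True
      then have "f ?b < f ?a" using inc[of ?b ?a] ab1 lk a1 by blast
      moreover have "odd (cF (I x) (Suc k))" using c True \<open>odd (cF (I x) k)\<close> by simp
      ultimately show ?thesis unfolding fS by simp
    next
      case False
      then have "f ?a < f ?b" using dec[of ?b ?a] ab1 lk a1 by linarith
      moreover have "even (cF (I x) (Suc k))" using c False \<open>odd (cF (I x) k)\<close> by simp
      ultimately show ?thesis unfolding fS by simp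
    qed
  qed
qed

end


lemma rotate_double:
  assumes "k < length u"
  shows "rotate k (u @ u) = rotate k u @ rotate k u"
proof -
  have l: "k mod length (u @ u) = k" "k mod length u = k" using assms by auto
  have "rotate k (u @ u) = drop k (u @ u) @ take k (u @ u)" using l by (simp add: rotate_drop_take)
  also have "\<dots> = drop k u @ u @ take k u" using assms by simp
  also have "\<dots> = (drop k u @ take k u) @ (drop k u @ take k u)"
    by (metis append_take_drop_id append.assoc)
  also have "drop k u @ take k u = rotate k u" using l by (simp add: rotate_drop_take)
  finally show ?thesis .
qed

context lp
begin

definition per where "per = (LEAST k. 0 < k \<and> rotate k w = w)"

lemma rot_n: "rotate n w = w" by simp

lemma per_props: "0 < per" "per \<le> n" "rotate per w = w"
proof -
  have "0 < per \<and> rotate per w = w" unfolding per_def by (rule LeastI[of _ n]) (use n2 in auto)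
  moreover have "per \<le> n" unfolding per_def by (rule Least_le) (use n2 in auto)
  ultimately show "0 < per" "per \<le> n" "rotate per w = w" by auto
qed

lemma per_min: "0 < k \<Longrightarrow> k < per \<Longrightarrow> rotate k w \<noteq> w"
  using not_less_Least[of k "\<lambda>k. 0 < k \<and> rotate k w = w"] unfolding per_def by auto

definition F where "F = {y \<in> {1..n}. s y = w}"

lemma F1: "1 \<in> F" unfolding F_def w_def using one_in by simp

lemma finF: "finite F" unfolding F_def by simp

lemma gF: "y \<in> F \<Longrightarrow> (f^^per) y \<in> F"
proof -
  assume y: "y \<in> F"
  then have "y \<in> {1..n}" "s y = w" unfolding F_def by auto
  then have "s ((f^^per) y) = w" using s_pow per_props(3) by simp
  then show ?thesis using powin \<open>y \<in> {1..n}\<close> unfolding F_def by simp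
qed

lemma IF: assumes "y \<in> F" "j < n" shows "I y j = I 1 j"
proof -
  have "s y = s 1" using assms unfolding F_def w_def by simp
  then have "s y ! j = s 1 ! j" by simp
  then show ?thesis using assms by (simp add: s_nth)
qed

lemma g_mono:
  assumes "y \<in> F" "z \<in> F" "y < z"
  shows "if even (cF (I 1) per) then (f^^per) y < (f^^per) z else (f^^per) z < (f^^per) y"
proof -
  have yz: "y \<in> {1..n}" "z \<in> {1..n}" using assms unfolding F_def by auto
  have pre: "\<forall>j<per. I y j = I z j" using IF assms per_props(2) by auto
  have "cF (I y) per = cF (I 1) per" using IF[OF assms(1)] per_props(2) by (intro cF_cong) auto
  then show ?thesis using pow_mono[OF yz assms(3) pre] by simp
qed

lemma cF_w: "cF (I 1) per = count_list (take per w) False"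
proof -
  have "cF (I 1) per = cF ((!) w) per" using per_props(2) by (intro cF_cong) (auto simp: w_def s_nth)
  also have "\<dots> = count_list (take per w) False" using per_props(2) by (intro cF_count) simp
  finally show ?thesis .
qed

theorem struct:
  "primitive_word w \<or>
   (\<exists>u. w = u @ u \<and> primitive_word u \<and> odd (count_list u False) \<and> 2 * length u = n)"
proof (cases "per = n")
  case True
  have "primitive_word w"
  proof (rule ccontr)
    assume "\<not> primitive_word w"
    then obtain k where "0 < k" "k < length w" "rotate k w = w" using nonprim_rotate w_ne by blast
    then show False using per_min True by simp
  qed
  then show ?thesis by simp
next
  case False
  then have pn: "per < n" using per_props by simp
  have ne1: "(f^^per) 1 \<noteq> 1" using nret pn per_props by simp
  have odd: "odd (cF (I 1) per)"
  proof
    assume ev: "even (cF (I 1) per)"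
    have "(f^^per) 1 = 1"
    proof (rule mono_self_id[OF finF])
      show "(f^^per) y \<in> F" if "y \<in> F" for y using gF that .
      show "(f^^per) y < (f^^per) z" if "y \<in> F" "z \<in> F" "y < z" for y z
        using g_mono[OF that] ev by simp
    qed (rule F1)
    then show False using ne1 by simp
  qed
  have "(f^^per) ((f^^per) 1) = 1"
  proof (rule anti_self_inv[OF finF])
    show "(f^^per) y \<in> F" if "y \<in> F" for y using gF that .
    show "(f^^per) z < (f^^per) y" if "y \<in> F" "z \<in> F" "y < z" for y z
      using g_mono[OF that] odd by simp
  qed (rule F1)
  then have "(f^^(per + per)) 1 = 1" by (simp add: funpow_add)
  then have n2p: "n \<le> per + per" using nret[of "per + per"] per_props by (cases "per + per < n") auto
  have "rotate (n - per) w = w"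
  proof -
    have "rotate (n - per) w = rotate (n - per) (rotate per w)" using per_props by simp
    also have "\<dots> = rotate n w" using pn by (simp add: rotate_rotate)
    finally show ?thesis by simp
  qed
  then have "\<not> (n - per < per)" using per_min[of "n - per"] pn by auto
  then have np: "n = 2 * per" using n2p by simp
  define u where "u = take per w"
  have lu: "length u = per" unfolding u_def using per_props by simp
  have "w = drop per w @ take per w" using per_props pn by (metis rotate_drop_take mod_less w_len)
  then have "take per w = take per (drop per w @ take per w)" by simp
  also have "\<dots> = drop per w" using np by simp
  finally have dw: "drop per w = u" unfolding u_def by simp
  have wu: "w = u @ u" using append_take_drop_id[of per w] dw u_def by simp
  have pu: "primitive_word u"
  proof (rule ccontr)
    assume "\<not> primitive_word u"
    moreover have "u \<noteq> []" using lu per_props by auto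
    ultimately obtain k where k: "0 < k" "k < length u" "rotate k u = u" using nonprim_rotate by blast
    then have "rotate k w = w" using wu rotate_double[OF k(2)] by simp
    then show False using per_min k lu by simp
  qed
  have "odd (count_list u False)" using odd cF_w u_def by simp
  then show ?thesis using wu pu lu np by auto
qed

subsection \<open>Fibers\<close>

definition fib where "fib v = {y \<in> {1..n}. s y = v}"

lemma fin_fib: "finite (fib v)" unfolding fib_def by simp

lemma fib_f: assumes "v \<in> necklace w" shows "f ` fib v = fib (rotate1 v)"
proof
  show "f ` fib v \<subseteq> fib (rotate1 v)" unfolding fib_def using s_f fin by auto
  show "fib (rotate1 v) \<subseteq> f ` fib v"
  proof
    fix z assume z: "z \<in> fib (rotate1 v)"
    then have zn: "z \<in> {1..n}" unfolding fib_def by simp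
    define y where "y = inv f z"
    have fy: "f y = z" unfolding y_def using permutes_inverses(1)[OF perm] by simp
    have yn: "y \<in> {1..n}" using zn fy permutes_in_image[OF perm, of y] by simp
    have "rotate1 (s y) = rotate1 v" using z fy s_f[OF yn] unfolding fib_def by simp
    then have "s y = v" using inj_rotate1 by (auto dest: injD)
    then show "z \<in> f ` fib v" using yn fy unfolding fib_def by blast
  qed
qed

lemma card_fib_f: assumes "v \<in> necklace w" shows "card (fib (rotate1 v)) = card (fib v)"
proof -
  have "card (f ` fib v) = card (fib v)" using injf by (intro card_image) (auto simp: inj_on_def dest: injD)
  then show ?thesis using fib_f[OF assms] by simp
qed

lemma card_fib_rot: "card (fib (rotate k w)) = card (fib w)"
proof (induction k)
  case (Suc k)
  have "rotate k w \<in> necklace w" unfolding necklace_def by auto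
  then show ?case using card_fib_f[of "rotate k w"] Suc by simp
qed simp

definition m where "m = card (fib w)"

lemma card_fib: "v \<in> necklace w \<Longrightarrow> card (fib v) = m"
  unfolding necklace_def m_def using card_fib_rot by auto

lemma card_pre: assumes "A \<subseteq> necklace w" shows "card {y \<in> {1..n}. s y \<in> A} = card A * m"
proof -
  have fA: "finite A" using assms finite_subset[OF assms] s_image by (metis finite_atLeastAtMost finite_imageI)
  have "{y \<in> {1..n}. s y \<in> A} = (\<Union>v\<in>A. fib v)" unfolding fib_def by auto
  then have "card {y \<in> {1..n}. s y \<in> A} = (\<Sum>v\<in>A. card (fib v))"
    using fA fin_fib by (simp add: card_UN_disjoint fib_def disjoint_iff)
  also have "\<dots> = (\<Sum>v\<in>A. m)" using card_fib assms by (intro sum.cong) auto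
  finally show ?thesis by simp
qed

lemma n_eq: "n = card (necklace w) * m"
proof -
  have "{y \<in> {1..n}. s y \<in> necklace w} = {1..n}" using s_in by auto
  then show ?thesis using card_pre[of "necklace w"] by simp
qed

lemma cardN_pos: "0 < card (necklace w)"
  using n_eq n2 by (cases "card (necklace w)") auto

lemma m_eq: "m = n div card (necklace w)"
  using n_eq cardN_pos by (metis nonzero_mult_div_cancel_left not_gr0)

definition R where "R a = card {v \<in> necklace w. v = a \<or> tless v a}"

lemma le_char:
  assumes x: "x \<in> {1..n}" and a: "a \<in> necklace w"
  shows "(s x = a \<or> tless (s x) a) \<longleftrightarrow> x \<le> m * R a"
proof -
  let ?A = "{v \<in> necklace w. v = a \<or> tless v a}"
  let ?D = "{y \<in> {1..n}. s y \<in> ?A}"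
  have cD: "card ?D = m * R a" unfolding R_def using card_pre[of ?A] by (simp add: mult.commute)
  have down: "y \<in> ?D" if "y \<in> {1..n}" "z \<in> ?D" "y \<le> z" for y z
  proof -
    have "s y = s z \<or> tless (s y) (s z)" using s_le that by auto
    moreover have "s z = a \<or> tless (s z) a" using that by auto
    ultimately have "s y = a \<or> tless (s y) a" by (elim disjE) (auto intro: tless_trans)
    then show ?thesis using s_in that(1) by auto
  qed
  show ?thesis
  proof
    assume h: "s x = a \<or> tless (s x) a"
    then have xD: "x \<in> ?D" using x s_in by auto
    have "{1..x} \<subseteq> ?D"
    proof
      fix y assume y: "y \<in> {1..x}"
      then have "y \<in> {1..n}" using x by auto
      then show "y \<in> ?D" using down[OF _ xD] y by auto
    qed
    then have "card {1..x} \<le> card ?D" by (intro card_mono) auto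
    then show "x \<le> m * R a" using cD by simp
  next
    assume h: "x \<le> m * R a"
    show "s x = a \<or> tless (s x) a"
    proof (rule ccontr)
      assume "\<not> (s x = a \<or> tless (s x) a)"
      then have "x \<notin> ?D" by auto
      then have nD: "x \<notin> ?D" .
      have "?D \<subseteq> {1..x-1}"
      proof
        fix y assume yD: "y \<in> ?D"
        then have y1: "y \<in> {1..n}" by simp
        have "\<not> x \<le> y"
        proof
          assume "x \<le> y"
          then have "x \<in> ?D" by (rule down[OF x yD])
          with nD show False by contradiction
        qed
        then show "y \<in> {1..x-1}" using y1 by auto
      qed
      then have "card ?D \<le> x - 1" using card_mono[of "{1..x-1}" ?D] by simp
      then have "m * R a \<le> x - 1" using cD by simp
      then show False using h x by simp linarith
    qed
  qed
qed

end


locale two = A: lp n e f + B: lp n e g for n e :: nat and f g :: "nat \<Rightarrow> nat" +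
  assumes sameN: "necklace (A.w) = necklace (B.w)"
begin

lemma m_same: "A.m = B.m" using A.m_eq B.m_eq sameN by simp

lemma R_same: "A.R = B.R" unfolding A.R_def B.R_def using sameN by simp

lemma aux1:
  assumes x: "x \<in> {1..n}" and t: "tless (A.s x) (B.s x)"
  shows False
proof -
  let ?a = "A.s x" and ?b = "B.s x"
  have aN: "?a \<in> necklace A.w" using A.s_in x .
  then have aN': "?a \<in> necklace B.w" using sameN by simp
  have "x \<le> A.m * A.R ?a" using A.le_char[OF x aN] by simp
  then have "x \<le> B.m * B.R ?a" using m_same R_same by simp
  then have "?b = ?a \<or> tless ?b ?a" using B.le_char[OF x aN'] by simp
  then show False using t tless_asym tless_irrefl by metis
qed

lemma aux2:
  assumes x: "x \<in> {1..n}" and t: "tless (B.s x) (A.s x)"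
  shows False
proof -
  let ?a = "A.s x" and ?b = "B.s x"
  have bN': "?b \<in> necklace B.w" using B.s_in x .
  then have bN: "?b \<in> necklace A.w" using sameN by simp
  have "x \<le> B.m * B.R ?b" using B.le_char[OF x bN'] by simp
  then have "x \<le> A.m * A.R ?b" using m_same R_same by simp
  then have "?a = ?b \<or> tless ?a ?b" using A.le_char[OF x bN] by simp
  then show False using t tless_asym tless_irrefl by metis
qed

lemma s_same: assumes x: "x \<in> {1..n}" shows "A.s x = B.s x"
proof (rule ccontr)
  assume "A.s x \<noteq> B.s x"
  then have "tless (A.s x) (B.s x) \<or> tless (B.s x) (A.s x)" by (intro tless_total) simp
  then show False using aux1[OF x] aux2[OF x] by blast
qed

lemma fib_same: "A.fib v = B.fib v"
  unfolding A.fib_def B.fib_def using s_same by auto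

lemma same_letter:
  assumes "y \<in> A.fib v" "z \<in> A.fib v" shows "(y \<le> e) = (z \<le> e)"
proof -
  have "A.s y = A.s z" using assms unfolding A.fib_def by simp
  then have "A.s y ! 0 = A.s z ! 0" by simp
  then show ?thesis using A.n2 by (simp add: A.s_nth A.I0)
qed

lemma fg_eq: "f x = g x"
proof (cases "x \<in> {1..n}")
  case False
  then show ?thesis using permutes_not_in[OF A.perm] permutes_not_in[OF B.perm] by simp
next
  case True
  let ?v = "A.s x"
  let ?F = "A.fib ?v" and ?F' = "A.fib (rotate1 ?v)"
  have vN: "?v \<in> necklace A.w" using A.s_in True .
  have vN': "?v \<in> necklace B.w" using vN sameN by simp
  have xF: "x \<in> ?F" using True unfolding A.fib_def by simp
  have imf: "f ` ?F = ?F'" using A.fib_f[OF vN] .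
  have img: "g ` ?F = ?F'" using B.fib_f[OF vN'] fib_same by simp
  have bf: "bij_betw f ?F ?F'" unfolding bij_betw_def using imf A.injf by (auto simp: inj_on_def dest: injD)
  have bg: "bij_betw g ?F ?F'" unfolding bij_betw_def using img B.injf by (auto simp: inj_on_def dest: injD)
  have fin: "finite ?F" "finite ?F'" using A.fin_fib by auto
  have fxF: "f x \<in> ?F'" "g x \<in> ?F'" using imf img xF by auto
  have Fn: "y \<in> {1..n}" if "y \<in> ?F" for y using that unfolding A.fib_def by simp
  show ?thesis
  proof (cases "x \<le> e")
    case True
    have le: "y \<le> e" if "y \<in> ?F" for y using same_letter[OF that xF] True by simp
    have mf: "f y < f z" if "y \<in> ?F" "z \<in> ?F" "y < z" for y z
      using A.inc[of y z] le[OF that(2)] Fn[OF that(1)] that(3) by simp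
    have mg: "g y < g z" if "y \<in> ?F" "z \<in> ?F" "y < z" for y z
      using B.inc[of y z] le[OF that(2)] Fn[OF that(1)] that(3) by simp
    have "card {y\<in>?F. y < x} = card {z\<in>?F'. z < f x}" by (rule mono_card_lt[OF fin(1) bf mf xF])
    moreover have "card {y\<in>?F. y < x} = card {z\<in>?F'. z < g x}" by (rule mono_card_lt[OF fin(1) bg mg xF])
    ultimately show ?thesis using card_lt_inj[OF fin(2) fxF] by simp
  next
    case False
    have gt: "\<not> y \<le> e" if "y \<in> ?F" for y using same_letter[OF that xF] False by simp
    have mf: "f z < f y" if "y \<in> ?F" "z \<in> ?F" "y < z" for y z
      using A.dec[of y z] gt[OF that(1)] Fn[OF that(2)] that(3) by simp
    have mg: "g z < g y" if "y \<in> ?F" "z \<in> ?F" "y < z" for y z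
      using B.dec[of y z] gt[OF that(1)] Fn[OF that(2)] that(3) by simp
    have "card {y\<in>?F. y < x} = card {z\<in>?F'. f x < z}" by (rule anti_card_lt[OF fin(1) bf mf xF])
    moreover have "card {y\<in>?F. y < x} = card {z\<in>?F'. g x < z}" by (rule anti_card_lt[OF fin(1) bg mg xF])
    ultimately show ?thesis using card_gt_inj[OF fin(2) fxF] by simp
  qed
qed

lemma fg: "f = g" using fg_eq by auto

end


lemma lex_lt:
  fixes a b t t' m :: nat
  assumes "t < m" "t' < m"
  shows "(m*a + t < m*b + t') = (a < b \<or> (a = b \<and> t < t'))"
proof (cases "a < b")
  case True
  have "m*a + t < m*a + m" using assms by simp
  also have "\<dots> = m * (a + 1)" by simp
  also have "\<dots> \<le> m * b" using True by (intro mult_le_mono2) simp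
  finally show ?thesis using True by simp
next
  case False
  show ?thesis
  proof (cases "a = b")
    case True then show ?thesis by simp
  next
    case False2: False
    then have "b < a" using False by simp
    have "m*b + t' < m*b + m" using assms by simp
    also have "\<dots> = m * (b + 1)" by simp
    also have "\<dots> \<le> m * a" using \<open>b < a\<close> by (intro mult_le_mono2) simp
    finally show ?thesis using False False2 by simp
  qed
qed

lemma lex_eq:
  fixes a b t t' m :: nat
  assumes "t < m" "t' < m" "m*a + t = m*b + t'"
  shows "a = b \<and> t = t'"
  using lex_lt[OF assms(1,2), of a b] lex_lt[OF assms(2,1), of b a] assms(3)
  by (metis less_irrefl linorder_neqE_nat)

lemma count_list_rotate1: "count_list (rotate1 xs) x = count_list xs x"
  by (cases xs) auto

lemma count_list_rotate: "count_list (rotate k xs) x = count_list xs x"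
  by (induction k) (auto simp: count_list_rotate1)

locale cons =
  fixes n c m :: nat and w0 :: "bool list"
  assumes len: "length w0 = n" and n2: "2 \<le> n" and nm: "n = m * c" and m12: "m = 1 \<or> m = 2"
    and rotc: "rotate c w0 = w0"
    and dist: "\<And>a b. a < c \<Longrightarrow> b < c \<Longrightarrow> rotate a w0 = rotate b w0 \<Longrightarrow> a = b"
    and par: "m = 2 \<Longrightarrow> odd (count_list (take c w0) False)"
begin

lemma c0: "0 < c" using nm n2 by (cases c) auto
lemma m0: "0 < m" using m12 by auto
lemma c_le: "c \<le> n" using nm m0 by simp

definition N where "N = necklace w0"

lemma rot_mod: "rotate k w0 = rotate (k mod c) w0"
proof -
  have "k = k mod c + c * (k div c)" by simp
  then have "rotate k w0 = rotate (k mod c) (rotate (c * (k div c)) w0)"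
    by (metis rotate_rotate)
  then show ?thesis using rotate_mult[OF rotc] by simp
qed

lemma N_eq: "N = (\<lambda>k. rotate k w0) ` {..<c}"
proof
  show "N \<subseteq> (\<lambda>k. rotate k w0) ` {..<c}"
  proof
    fix v assume "v \<in> N"
    then obtain k where "v = rotate k w0" unfolding N_def necklace_def by auto
    then have "v = rotate (k mod c) w0" using rot_mod by simp
    moreover have "k mod c < c" using c0 by simp
    ultimately show "v \<in> (\<lambda>k. rotate k w0) ` {..<c}" by blast
  qed
  show "(\<lambda>k. rotate k w0) ` {..<c} \<subseteq> N" unfolding N_def necklace_def by auto
qed

lemma cardN: "card N = c"
proof -
  have "inj_on (\<lambda>k. rotate k w0) {..<c}" using dist by (auto simp: inj_on_def)
  then show ?thesis using N_eq by (simp add: card_image)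
qed

lemma finN: "finite N" using N_eq by simp

lemma lenN: "v \<in> N \<Longrightarrow> length v = n" unfolding N_def necklace_def using len by auto

lemma neN: "v \<in> N \<Longrightarrow> v \<noteq> []" using lenN n2 by fastforce

lemma rot_in: "v \<in> N \<Longrightarrow> rotate k v \<in> N"
  unfolding N_def necklace_def by (auto simp: rotate_rotate)

lemma rot1_in: "v \<in> N \<Longrightarrow> rotate1 v \<in> N" using rot_in[of v 1] by simp

lemma rotc_v: "v \<in> N \<Longrightarrow> rotate c v = v"
proof -
  assume "v \<in> N"
  then obtain a where v: "v = rotate a w0" unfolding N_def necklace_def by auto
  have "rotate c v = rotate (c + a) w0" by (simp add: v rotate_rotate)
  also have "\<dots> = rotate a (rotate c w0)" by (simp add: rotate_rotate add.commute)
  also have "\<dots> = v" using rotc v by simp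
  finally show "rotate c v = v" .
qed

definition rk where "rk v = card {u \<in> N. tless u v}"

lemma rk_lt: assumes "u \<in> N" "v \<in> N" "tless u v" shows "rk u < rk v"
proof -
  have "{x \<in> N. tless x u} \<subset> {x \<in> N. tless x v}"
    using assms tless_trans tless_irrefl by blast
  then show ?thesis unfolding rk_def using finN by (intro psubset_card_mono) auto
qed

lemma rk_less_iff: assumes "u \<in> N" "v \<in> N" shows "rk u < rk v \<longleftrightarrow> tless u v"
proof
  assume h: "rk u < rk v"
  show "tless u v"
  proof (rule ccontr)
    assume nt: "\<not> tless u v"
    have "u \<noteq> v" using h by auto
    then have "tless v u" using tless_total[of u v] nt lenN assms by auto
    then show False using rk_lt[OF assms(2,1)] h by simp
  qed
qed (rule rk_lt[OF assms])

lemma rk_inj: "inj_on rk N"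
proof (rule inj_onI)
  fix u v assume uv: "u \<in> N" "v \<in> N" "rk u = rk v"
  show "u = v"
  proof (rule ccontr)
    assume "u \<noteq> v"
    then have "tless u v \<or> tless v u" using tless_total lenN uv by auto
    then show False using rk_lt uv by fastforce
  qed
qed

lemma rk_range: assumes "v \<in> N" shows "rk v < c"
proof -
  have "{u \<in> N. tless u v} \<subseteq> N - {v}" using tless_irrefl by auto
  then have "rk v \<le> card (N - {v})" unfolding rk_def using finN by (intro card_mono) auto
  also have "\<dots> = c - 1" using assms cardN finN by simp
  finally show ?thesis using c0 by simp
qed

lemma rk_image: "rk ` N = {..<c}"
proof -
  have "rk ` N \<subseteq> {..<c}" using rk_range by auto
  moreover have "card (rk ` N) = card {..<c}" using card_image[OF rk_inj] cardN by simp
  ultimately show ?thesis by (intro card_subset_eq) auto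
qed

subsection \<open>Encoding\<close>

definition enc where "enc v t = m * rk v + t + 1"

lemma enc_range: assumes "v \<in> N" "t < m" shows "enc v t \<in> {1..n}"
proof -
  have "m * rk v + m \<le> m * c"
  proof -
    have "m * rk v + m = m * (rk v + 1)" by simp
    also have "\<dots> \<le> m * c" using rk_range[OF assms(1)] by (intro mult_le_mono2) simp
    finally show ?thesis .
  qed
  then show ?thesis unfolding enc_def using assms nm by auto
qed

lemma enc_lt: assumes "v \<in> N" "v' \<in> N" "t < m" "t' < m"
  shows "enc v t < enc v' t' \<longleftrightarrow> (tless v v' \<or> (v = v' \<and> t < t'))"
proof -
  have "enc v t < enc v' t' \<longleftrightarrow> (rk v < rk v' \<or> (rk v = rk v' \<and> t < t'))"
    unfolding enc_def using lex_lt[OF assms(3,4)] by simp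
  also have "\<dots> \<longleftrightarrow> (tless v v' \<or> (v = v' \<and> t < t'))"
    using rk_less_iff[OF assms(1,2)] rk_inj assms(1,2) by (auto dest: inj_onD)
  finally show ?thesis .
qed

lemma enc_inj: assumes "v \<in> N" "v' \<in> N" "t < m" "t' < m" "enc v t = enc v' t'"
  shows "v = v' \<and> t = t'"
proof -
  have "rk v = rk v' \<and> t = t'" using lex_eq[OF assms(3,4)] assms(5) unfolding enc_def by simp
  then show ?thesis using rk_inj assms(1,2) by (auto dest: inj_onD)
qed

lemma enc_surj: assumes "x \<in> {1..n}" shows "\<exists>v\<in>N. \<exists>t<m. x = enc v t"
proof -
  let ?q = "(x - 1) div m" and ?t = "(x - 1) mod m"
  have "x - 1 < m * c" using assms nm by auto
  then have "?q < c" using m0 by (simp add: less_mult_imp_div_less mult.commute)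
  then obtain v where v: "v \<in> N" "rk v = ?q" using rk_image by (metis imageE lessThan_iff)
  have "x = m * ?q + ?t + 1" using assms by simp
  then have "x = enc v ?t" unfolding enc_def using v by simp
  moreover have "?t < m" using m0 by simp
  ultimately show ?thesis using v by blast
qed

definition dec where "dec x = (SOME p. fst p \<in> N \<and> snd p < m \<and> x = enc (fst p) (snd p))"

lemma dec_enc: assumes "v \<in> N" "t < m" shows "dec (enc v t) = (v, t)"
proof -
  have ex: "\<exists>p. fst p \<in> N \<and> snd p < m \<and> enc v t = enc (fst p) (snd p)"
    using assms by (intro exI[of _ "(v,t)"]) simp
  let ?p = "dec (enc v t)"
  have "fst ?p \<in> N \<and> snd ?p < m \<and> enc v t = enc (fst ?p) (snd ?p)"
    unfolding dec_def using someI_ex[OF ex] .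
  then have "v = fst ?p \<and> t = snd ?p" using enc_inj[of v "fst ?p" t "snd ?p"] assms by blast
  then show ?thesis by (metis prod.collapse)
qed

definition fl where "fl v t = (if hd v then t else m - 1 - t)"

lemma fl_lt: "t < m \<Longrightarrow> fl v t < m" unfolding fl_def using m0 by auto

definition pi where
  "pi x = (if x \<in> {1..n} then enc (rotate1 (fst (dec x))) (fl (fst (dec x)) (snd (dec x))) else x)"

lemma pi_enc: assumes "v \<in> N" "t < m" shows "pi (enc v t) = enc (rotate1 v) (fl v t)"
  using enc_range[OF assms] dec_enc[OF assms] unfolding pi_def by simp

lemma pi_perm: "pi permutes {1..n}"
proof (rule inj_imp_permutes)
  show "inj_on pi {1..n}"
  proof (rule inj_onI)
    fix x y assume x: "x \<in> {1..n}" and y: "y \<in> {1..n}" and e: "pi x = pi y"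
    obtain v t where vt: "v \<in> N" "t < m" "x = enc v t" using enc_surj[OF x] by blast
    obtain v' t' where vt': "v' \<in> N" "t' < m" "y = enc v' t'" using enc_surj[OF y] by blast
    have "enc (rotate1 v) (fl v t) = enc (rotate1 v') (fl v' t')"
      using e vt vt' pi_enc by simp
    then have "rotate1 v = rotate1 v' \<and> fl v t = fl v' t'"
      using enc_inj rot1_in fl_lt vt vt' by blast
    then have "v = v'" "fl v t = fl v t'" using inj_rotate1 by (auto dest: injD)
    then have "t = t'" using vt vt' unfolding fl_def by (auto split: if_splits)
    then show "x = y" using vt vt' \<open>v = v'\<close> by simp
  qed
  show "pi x \<in> {1..n}" if xin: "x \<in> {1..n}" for x
  proof -
    obtain v t where vt: "v \<in> N" "t < m" "x = enc v t" using enc_surj[OF xin] by blast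
    then show ?thesis using pi_enc enc_range rot1_in fl_lt by simp
  qed
  show "pi x = x" if xn: "x \<notin> {1..n}" for x unfolding pi_def by (rule if_not_P[OF xn])
qed simp

fun tau :: "bool list \<Rightarrow> nat \<Rightarrow> nat \<Rightarrow> nat" where
  "tau v t 0 = t"
| "tau v t (Suc k) = fl (rotate k v) (tau v t k)"

lemma tau_lt: "t < m \<Longrightarrow> tau v t k < m"
  by (induction k) (auto simp: fl_lt)

lemma pi_pow: assumes "v \<in> N" "t < m" shows "(pi^^k) (enc v t) = enc (rotate k v) (tau v t k)"
proof (induction k)
  case (Suc k)
  have "(pi^^Suc k) (enc v t) = pi (enc (rotate k v) (tau v t k))" using Suc by simp
  also have "\<dots> = enc (rotate1 (rotate k v)) (fl (rotate k v) (tau v t k))"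
    using pi_enc rot_in[OF assms(1)] tau_lt[OF assms(2)] by simp
  finally show ?case by simp
qed simp

definition h where "h = card {v \<in> N. hd v}"

lemma hd_nth: "v \<in> N \<Longrightarrow> hd v = v ! 0" using neN by (simp add: hd_conv_nth)

lemma T1: assumes "u \<in> N" "v \<in> N" "hd u" "\<not> hd v" shows "tless u v"
  unfolding tless_def using assms lenN n2 hd_nth by (intro conjI exI[of _ 0]) auto

lemma rk_h: assumes v: "v \<in> N" shows "rk v < h \<longleftrightarrow> hd v"
proof
  assume hv: "hd v"
  let ?A = "{u \<in> N. hd u}"
  have sub: "{u \<in> N. tless u v} \<subseteq> ?A - {v}"
  proof
    fix u assume u: "u \<in> {u \<in> N. tless u v}"
    then have uN: "u \<in> N" and tu: "tless u v" by simp_all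
    have "u \<noteq> v" using tu tless_irrefl by metis
    moreover have "hd u"
    proof (rule ccontr)
      assume nhu: "\<not> hd u"
      have "tless v u" by (rule T1[OF v uN hv nhu])
      then show False using tu tless_asym by metis
    qed
    ultimately show "u \<in> ?A - {v}" using uN by simp
  qed
  have fA: "finite ?A" using finN by simp
  have vA: "v \<in> ?A" using v hv by simp
  have "rk v \<le> card (?A - {v})" unfolding rk_def using fA by (intro card_mono[OF _ sub]) auto
  also have "\<dots> = card ?A - 1" using vA fA by simp
  also have "\<dots> < card ?A"
  proof -
    have "card ?A \<noteq> 0" using vA fA by (metis card_0_eq empty_iff)
    then show ?thesis by simp
  qed
  finally show "rk v < h" unfolding h_def .
next
  assume lt: "rk v < h"
  show "hd v"
  proof (rule ccontr)
    assume nh: "\<not> hd v"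
    have "{u \<in> N. hd u} \<subseteq> {u \<in> N. tless u v}"
    proof
      fix u assume "u \<in> {u \<in> N. hd u}"
      then have uN: "u \<in> N" and hu: "hd u" by simp_all
      show "u \<in> {u \<in> N. tless u v}" using T1[OF uN v hu nh] uN by simp
    qed
    then have "h \<le> rk v" unfolding h_def rk_def using finN by (intro card_mono) auto
    then show False using lt by simp
  qed
qed

definition ee where "ee = m * h"

lemma h_le: "h \<le> c" unfolding h_def using cardN finN card_mono[of N "{v \<in> N. hd v}"] by auto

lemma ee_le: "ee \<le> n" unfolding ee_def using h_le nm by simp

lemma enc_le_e: assumes "v \<in> N" "t < m" shows "enc v t \<le> ee \<longleftrightarrow> hd v"
proof -
  have "enc v t \<le> ee \<longleftrightarrow> m * rk v + t < m * h + 0" unfolding enc_def ee_def by (simp add: Suc_le_eq)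
  also have "\<dots> \<longleftrightarrow> rk v < h" using lex_lt[OF assms(2) m0] by simp
  also have "\<dots> \<longleftrightarrow> hd v" using rk_h[OF assms(1)] .
  finally show ?thesis .
qed

lemma T2: assumes u: "u \<in> N" and v: "v \<in> N" and hh: "hd u = hd v" and t: "tless u v"
  shows "if hd u then tless (rotate1 u) (rotate1 v) else tless (rotate1 v) (rotate1 u)"
proof -
  obtain k where k: "k < n" "\<forall>j<k. u!j = v!j" "u!k \<noteq> v!k" "u!k = even (cF ((!) u) k)"
    using t lenN u unfolding tless_def by auto
  have "k \<noteq> 0"
  proof
    assume "k = 0" then show False using k(3) hh hd_nth[OF u] hd_nth[OF v] by simp
  qed
  then obtain k' where k': "k = Suc k'" by (cases k) auto
  have r: "rotate1 x ! j = x ! Suc j" if "x \<in> N" "j < k'" for x j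
    using that k k' lenN[OF that(1)] by (simp add: nth_rotate1)
  have rk': "rotate1 x ! k' = x ! k" if "x \<in> N" for x
    using that k k' lenN[OF that(1)] by (simp add: nth_rotate1)
  have pre: "\<forall>j<k'. rotate1 u ! j = rotate1 v ! j" using r u v k(2) k' by auto
  have cu: "cF ((!) u) k = (if u!0 then 0 else 1) + cF ((!) (rotate1 u)) k'"
    using cF_shift[of "(!) u" k'] k' r[OF u] by (simp add: cF_cong[of k' "(!) (rotate1 u)" "\<lambda>j. u ! Suc j"])
  have cuv: "cF ((!) (rotate1 u)) k' = cF ((!) (rotate1 v)) k'" using pre by (intro cF_cong) auto
  have lr: "length (rotate1 u) = length (rotate1 v)" "k' < length (rotate1 u)" using lenN u v k k' by auto
  show ?thesis
  proof (cases "hd u")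
    case True
    then have "u!0" using hd_nth u by simp
    then have "rotate1 u ! k' = even (cF ((!) (rotate1 u)) k')" using k(4) cu rk'[OF u] by simp
    moreover have "rotate1 u ! k' \<noteq> rotate1 v ! k'" using rk' u v k(3) by simp
    ultimately show ?thesis using True pre lr unfolding tless_def by auto
  next
    case False
    then have "\<not> u!0" using hd_nth u by simp
    then have "rotate1 v ! k' = even (cF ((!) (rotate1 v)) k')" using k(3,4) cu cuv rk'[OF u] rk'[OF v] by auto
    moreover have "rotate1 u ! k' \<noteq> rotate1 v ! k'" using rk' u v k(3) by simp
    ultimately show ?thesis using False pre lr unfolding tless_def by (auto intro!: exI[of _ k'])
  qed
qed

end


lemma one_minus_mod2: "1 - (a::nat) mod 2 = (Suc a) mod 2" by presburger

context cons
begin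

definition v0 where "v0 = inv_into N rk 0"

lemma v0N: "v0 \<in> N" and rk_v0: "rk v0 = 0"
proof -
  have "0 \<in> rk ` N" using rk_image c0 by simp
  then show "v0 \<in> N" "rk v0 = 0" unfolding v0_def by (auto intro: inv_into_into f_inv_into_f)
qed

lemma enc_v0: "enc v0 0 = 1" unfolding enc_def using rk_v0 by simp

lemma inc_pi:
  assumes "1 \<le> a" "a < b" "b \<le> ee" shows "pi a < pi b"
proof -
  have an: "a \<in> {1..n}" "b \<in> {1..n}" using assms ee_le by auto
  obtain va ta where a: "va \<in> N" "ta < m" "a = enc va ta" using enc_surj[OF an(1)] by blast
  obtain vb tb where b: "vb \<in> N" "tb < m" "b = enc vb tb" using enc_surj[OF an(2)] by blast
  have ha: "hd va" using enc_le_e[OF a(1,2)] a(3) assms by simp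
  have hb: "hd vb" using enc_le_e[OF b(1,2)] b(3) assms by simp
  have "tless va vb \<or> (va = vb \<and> ta < tb)" using enc_lt[OF a(1) b(1) a(2) b(2)] a b assms by simp
  then show ?thesis
  proof
    assume t: "tless va vb"
    have "tless (rotate1 va) (rotate1 vb)" using T2[OF a(1) b(1) _ t] ha hb by simp
    then show ?thesis using a b pi_enc enc_lt[OF rot1_in[OF a(1)] rot1_in[OF b(1)] fl_lt[OF a(2)] fl_lt[OF b(2)]] by simp
  next
    assume t: "va = vb \<and> ta < tb"
    then show ?thesis using a b pi_enc ha by (simp add: fl_def enc_def)
  qed
qed

lemma dec_pi:
  assumes "ee + 1 \<le> a" "a < b" "b \<le> n" shows "pi b < pi a"
proof -
  have an: "a \<in> {1..n}" "b \<in> {1..n}" using assms by auto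
  obtain va ta where a: "va \<in> N" "ta < m" "a = enc va ta" using enc_surj[OF an(1)] by blast
  obtain vb tb where b: "vb \<in> N" "tb < m" "b = enc vb tb" using enc_surj[OF an(2)] by blast
  have ha: "\<not> hd va" using enc_le_e[OF a(1,2)] a(3) assms by simp
  have hb: "\<not> hd vb" using enc_le_e[OF b(1,2)] b(3) assms by simp
  have "tless va vb \<or> (va = vb \<and> ta < tb)" using enc_lt[OF a(1) b(1) a(2) b(2)] a b assms by simp
  then show ?thesis
  proof
    assume t: "tless va vb"
    have "tless (rotate1 vb) (rotate1 va)" using T2[OF a(1) b(1) _ t] ha hb by simp
    then show ?thesis using a b pi_enc enc_lt[OF rot1_in[OF b(1)] rot1_in[OF a(1)] fl_lt[OF b(2)] fl_lt[OF a(2)]] by simp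
  next
    assume t: "va = vb \<and> ta < tb"
    then have "m - 1 - tb < m - 1 - ta" using b(2) by arith
    then show ?thesis using t a b pi_enc ha by (simp add: fl_def enc_def)
  qed
qed

lemma tau_par:
  assumes "m = 2" "t < 2"
  shows "tau v t k = (t + cF (\<lambda>j. hd (rotate j v)) k) mod 2"
proof (induction k)
  case 0 show ?case using assms(2) by simp
next
  case (Suc k)
  show ?case
  proof (cases "hd (rotate k v)")
    case True then show ?thesis using Suc by (simp add: fl_def)
  next
    case False
    then have "tau v t (Suc k) = m - 1 - tau v t k" by (simp add: fl_def)
    also have "\<dots> = 1 - tau v t k" using assms(1) by simp
    finally have "tau v t (Suc k) = 1 - tau v t k" .
    also have "\<dots> = Suc (t + cF (\<lambda>j. hd (rotate j v)) k) mod 2" using Suc one_minus_mod2 by simp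
    finally show ?thesis using False by simp
  qed
qed

lemma w0_double: assumes "m = 2" shows "w0 = take c w0 @ take c w0"
proof -
  have ln: "length w0 = 2 * c" using len nm assms by simp
  have "w0 = drop c w0 @ take c w0" using rotc ln c0 by (metis rotate_drop_take mod_less lessI mult_2 less_add_same_cancel1)
  then have "take c w0 = take c (drop c w0 @ take c w0)" by simp
  also have "\<dots> = drop c w0" using ln by simp
  finally have "drop c w0 = take c w0" by simp
  then show ?thesis using append_take_drop_id[of c w0] by simp
qed

lemma count_N: assumes "m = 2" "v \<in> N"
  shows "count_list (take c v) False = count_list (take c w0) False"
proof -
  let ?u = "take c w0"
  have lu: "length ?u = c" using len c_le by simp
  obtain a where a: "a < c" "v = rotate a w0" using assms N_eq by auto
  have "v = rotate a ?u @ rotate a ?u" using a rotate_double[of a ?u] lu w0_double[OF assms(1)] by simp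
  then have "take c v = rotate a ?u" using lu by simp
  then show ?thesis by (simp add: count_list_rotate)
qed

lemma tau_flip: assumes "m = 2" "v \<in> N" "t < 2" shows "tau v t c = 1 - t"
proof -
  have "cF (\<lambda>j. hd (rotate j v)) c = cF ((!) v) c"
  proof (rule cF_cong)
    fix j assume "j < c"
    then show "hd (rotate j v) = v ! j" using hd_rotate_conv_nth[OF neN[OF assms(2)]] lenN[OF assms(2)] c_le by simp
  qed
  also have "\<dots> = count_list (take c v) False" using c_le lenN[OF assms(2)] by (intro cF_count) simp
  also have "\<dots> = count_list (take c w0) False" using count_N assms by simp
  finally have "odd (cF (\<lambda>j. hd (rotate j v)) c)" using par assms(1) by simp
  then show ?thesis using tau_par[OF assms(1,3)] assms(3) by presburger
qed

lemma necklace_v0: "necklace v0 = N"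
proof -
  obtain a where "v0 = rotate a w0" using v0N unfolding N_def necklace_def by auto
  then show ?thesis unfolding N_def by (simp add: necklace_rotate)
qed

lemma cyc_pi: "\<forall>x\<in>{1..n}. \<exists>k. (pi^^k) 1 = x"
proof
  fix x assume x: "x \<in> {1..n}"
  obtain v t where vt: "v \<in> N" "t < m" "x = enc v t" using enc_surj[OF x] by blast
  obtain j where j: "v = rotate j v0" using vt(1) necklace_v0 unfolding necklace_def by auto
  have pj: "(pi^^j) 1 = enc v (tau v0 0 j)" using pi_pow[OF v0N m0, of j] enc_v0 j by simp
  have tl: "tau v0 0 j < m" using tau_lt m0 by simp
  show "\<exists>k. (pi^^k) 1 = x"
  proof (cases "tau v0 0 j = t")
    case True then show ?thesis using pj vt by auto
  next
    case False
    then have m2: "m = 2" using m12 vt tl by auto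
    have "(pi^^(c + j)) 1 = (pi^^c) ((pi^^j) 1)" by (simp add: funpow_add)
    also have "\<dots> = enc (rotate c v) (tau v (tau v0 0 j) c)" using pj pi_pow[OF vt(1) tl] by simp
    also have "\<dots> = enc v (1 - tau v0 0 j)" using rotc_v[OF vt(1)] tau_flip[OF m2 vt(1)] tl m2 by simp
    also have "1 - tau v0 0 j = t" using False tl vt(2) m2 by simp
    finally show ?thesis using vt by auto
  qed
qed

lemma lp_pi: "lp n ee pi"
  by (rule lp.intro) (use n2 ee_le pi_perm cyc_pi inc_pi dec_pi in auto)

lemma w_pi: "lp.w n ee pi = v0"
proof -
  interpret L: lp n ee pi by (rule lp_pi)
  have "L.w = map (L.I 1) [0..<n]" unfolding L.w_def L.s_def by simp
  also have "\<dots> = map ((!) v0) [0..<n]"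
  proof (rule map_cong[OF refl])
    fix j assume "j \<in> set [0..<n]"
    then have j: "j < n" by simp
    have "L.I 1 j = (enc (rotate j v0) (tau v0 0 j) \<le> ee)"
      unfolding L.I_def using pi_pow[OF v0N m0, of j] enc_v0 by simp
    also have "\<dots> = hd (rotate j v0)" using enc_le_e[OF rot_in[OF v0N] tau_lt[OF m0]] by simp
    also have "\<dots> = v0 ! j" using hd_rotate_conv_nth[OF neN[OF v0N]] lenN[OF v0N] j by simp
    finally show "L.I 1 j = v0 ! j" .
  qed
  also have "\<dots> = v0" using lenN[OF v0N] map_nth by metis
  finally show ?thesis .
qed

lemma h_count: "h = count_list (take c w0) True"
proof -
  have "{v \<in> N. hd v} = (\<lambda>k. rotate k w0) ` {k. k < c \<and> w0 ! k}"
  proof -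
    have ne: "w0 \<noteq> []" using len n2 by auto
    have hk: "hd (rotate k w0) = w0 ! k" if "k < c" for k
    proof -
      have "k mod length w0 = k" using len that c_le by simp
      then show ?thesis using hd_rotate_conv_nth[OF ne, of k] by simp
    qed
    show ?thesis
    proof
      show "{v \<in> N. hd v} \<subseteq> (\<lambda>k. rotate k w0) ` {k. k < c \<and> w0 ! k}"
        using N_eq hk by auto
      show "(\<lambda>k. rotate k w0) ` {k. k < c \<and> w0 ! k} \<subseteq> {v \<in> N. hd v}"
        using N_eq hk by auto
    qed
  qed
  moreover have "inj_on (\<lambda>k. rotate k w0) {k. k < c \<and> w0 ! k}" using dist by (auto simp: inj_on_def)
  ultimately have "h = card {k. k < c \<and> w0 ! k}" unfolding h_def by (simp add: card_image)
  also have "{k. k < c \<and> w0 ! k} = {k. k < length (take c w0) \<and> take c w0 ! k = True}"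
    using len c_le by auto
  also have "card \<dots> = count_list (take c w0) True" by (simp add: count_card)
  finally show ?thesis .
qed

theorem cons_main:
  "\<exists>p. lp n (m * count_list (take c w0) True) p \<and> necklace (lp.w n (m * count_list (take c w0) True) p) = necklace w0"
proof -
  have "ee = m * count_list (take c w0) True" unfolding ee_def using h_count by simp
  moreover have "necklace (lp.w n ee pi) = necklace w0" using w_pi necklace_v0 N_def by simp
  ultimately show ?thesis using lp_pi by metis
qed

end


lemma count_tf: "count_list u True + count_list u False = length (u :: bool list)"
  by (induction u) auto

lemma rot_mod_gen: assumes "rotate L x = x" "0 < L" shows "rotate k x = rotate (k mod L) x"
proof -
  have "k = k mod L + L * (k div L)" by simp
  then have "rotate k x = rotate (k mod L) (rotate (L * (k div L)) x)" by (metis rotate_rotate)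
  then show ?thesis using rotate_mult[OF assms(1)] by simp
qed

lemma necklace_double:
  assumes "u \<noteq> []" shows "necklace (u @ u) = (\<lambda>v. v @ v) ` necklace u"
proof
  have r: "rotate (length u) (u @ u) = u @ u" by (rule rotate_append)
  show "necklace (u @ u) \<subseteq> (\<lambda>v. v @ v) ` necklace u"
  proof
    fix v assume "v \<in> necklace (u @ u)"
    then obtain k where "v = rotate k (u @ u)" unfolding necklace_def by auto
    moreover have "rotate k (u @ u) = rotate (k mod length u) (u @ u)"
      by (rule rot_mod_gen[OF r]) (use assms in simp)
    ultimately have "v = rotate (k mod length u) (u @ u)" by simp
    also have "\<dots> = rotate (k mod length u) u @ rotate (k mod length u) u"
      using assms by (intro rotate_double) simp
    finally show "v \<in> (\<lambda>v. v @ v) ` necklace u" unfolding necklace_def by auto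
  qed
  show "(\<lambda>v. v @ v) ` necklace u \<subseteq> necklace (u @ u)"
  proof
    fix v assume "v \<in> (\<lambda>v. v @ v) ` necklace u"
    then obtain k where "v = rotate k u @ rotate k u" unfolding necklace_def by auto
    then have "v = rotate (k mod length u) u @ rotate (k mod length u) u"
      using rotate_conv_mod[of k u] by (simp only:)
    also have "\<dots> = rotate (k mod length u) (u @ u)"
      using assms by (intro rotate_double[symmetric]) simp
    finally show "v \<in> necklace (u @ u)" unfolding necklace_def by auto
  qed
qed

lemma nonprim_double: assumes "u \<noteq> []" "v \<in> necklace (u @ u)" shows "\<not> primitive_word v"
proof -
  obtain x where "v = x @ x" using necklace_double[OF assms(1)] assms(2) by auto
  then have "v = concat (replicate 2 x)" by (simp add: numeral_2_eq_2)
  then show ?thesis unfolding primitive_word_def by (intro notI) (metis one_less_numeral_iff semiring_norm(76))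
qed

lemma inj_dbl: "inj (\<lambda>v::bool list. v @ v)"
proof (rule injI)
  fix x y :: "bool list" assume "x @ x = y @ y"
  moreover have "length x = length y"
  proof -
    have "length (x @ x) = length (y @ y)" using \<open>x @ x = y @ y\<close> by simp
    then show ?thesis by simp
  qed
  ultimately show "x = y" by simp
qed

lemma lp_Lambda:
  assumes n2: "2 \<le> n" and i: "1 \<le> i" "i \<le> n - 1"
  shows "{p. cyclic_perm n p \<and> unimodal n p \<and> p i = n} \<union> {p. cyclic_perm n p \<and> unimodal n p \<and> p (i+1) = n}
         = {p. lp n i p}"
proof
  show "{p. lp n i p} \<subseteq> {p. cyclic_perm n p \<and> unimodal n p \<and> p i = n} \<union> {p. cyclic_perm n p \<and> unimodal n p \<and> p (i+1) = n}"
  proof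
    fix p assume "p \<in> {p. lp n i p}"
    then interpret L: lp n i p by simp
    have cp: "cyclic_perm n p" unfolding cyclic_perm_def using L.perm L.cyc by simp
    have um: "unimodal n p" unfolding unimodal_def using L.en L.inc L.dec
      by (intro exI[of _ i]) auto
    have "n \<in> p ` {1..n}" using permutes_image[OF L.perm] n2 by simp
    then obtain x where x: "x \<in> {1..n}" "p x = n" by auto
    have "x = i \<or> x = i + 1"
    proof (rule ccontr)
      assume "\<not> (x = i \<or> x = i + 1)"
      then consider "x < i" | "i + 1 < x" by linarith
      then show False
      proof cases
        case 1
        then have "p x < p i" using L.inc[of x i] x by simp
        moreover have "p i \<le> n" using L.fin[of i] i by simp
        ultimately show False using x by simp
      next
        case 2
        then have "p x < p (x - 1)" using L.dec[of "x-1" x] x by simp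
        moreover have "x - 1 \<in> {1..n}" using x 2 i by auto
        then have "p (x - 1) \<le> n" using L.fin[of "x-1"] by simp
        ultimately show False using x by simp
      qed
    qed
    then show "p \<in> {p. cyclic_perm n p \<and> unimodal n p \<and> p i = n} \<union> {p. cyclic_perm n p \<and> unimodal n p \<and> p (i+1) = n}"
      using cp um x by auto
  qed
  show "{p. cyclic_perm n p \<and> unimodal n p \<and> p i = n} \<union> {p. cyclic_perm n p \<and> unimodal n p \<and> p (i+1) = n} \<subseteq> {p. lp n i p}"
  proof
    fix p assume p: "p \<in> {p. cyclic_perm n p \<and> unimodal n p \<and> p i = n} \<union> {p. cyclic_perm n p \<and> unimodal n p \<and> p (i+1) = n}"
    then have perm: "p permutes {1..n}" and cyc: "\<forall>x\<in>{1..n}. \<exists>k. (p ^^ k) 1 = x"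
      unfolding cyclic_perm_def by auto
    from p obtain e' where e': "e' \<le> n" and inc': "\<forall>a b. 1 \<le> a \<and> a < b \<and> b \<le> e' \<longrightarrow> p a < p b"
      and dec': "\<forall>a b. e' + 1 \<le> a \<and> a < b \<and> b \<le> n \<longrightarrow> p a > p b"
      unfolding unimodal_def by auto
    have pin: "p x \<in> {1..n}" if "x \<in> {1..n}" for x using permutes_in_image[OF perm] that by simp
    have pinj: "p x \<noteq> p y" if "x \<noteq> y" for x y using permutes_inj[OF perm] that by (auto dest: injD)
    have incdec: "(\<forall>a b. 1 \<le> a \<longrightarrow> a < b \<longrightarrow> b \<le> i \<longrightarrow> p a < p b) \<and>
                  (\<forall>a b. i + 1 \<le> a \<longrightarrow> a < b \<longrightarrow> b \<le> n \<longrightarrow> p b < p a)"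
    proof (cases "p i = n")
      case True
      have e1: "e' \<le> i"
      proof (rule ccontr)
        assume "\<not> e' \<le> i"
        then have "p i < p (i+1)" using inc' i by auto
        moreover have "p (i+1) \<le> n" using pin[of "i+1"] i by simp
        ultimately show False using True by simp
      qed
      have e2: "i \<le> e' + 1"
      proof (rule ccontr)
        assume "\<not> i \<le> e' + 1"
        then have "e' + 1 \<le> i - 1" "i - 1 < i" "i \<le> n" using i by auto
        then have "p i < p (i-1)" using dec' by blast
        moreover have "i - 1 \<in> {1..n}" using i \<open>\<not> i \<le> e' + 1\<close> by auto
        then have "p (i-1) \<le> n" using pin[of "i-1"] by simp
        ultimately show False using True by simp
      qed
      show ?thesis
      proof (intro conjI allI impI)
        fix a b assume ab: "1 \<le> a" "a < b" "b \<le> i"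
        show "p a < p b"
        proof (cases "b \<le> e'")
          case True then show ?thesis using inc' ab by auto
        next
          case False
          then have "b = i" using ab e2 by simp
          moreover have "p a \<le> n" using pin[of a] ab i by simp
          moreover have "p a \<noteq> p i" using pinj[of a i] ab \<open>b = i\<close> by simp
          ultimately show ?thesis using \<open>p i = n\<close> by simp
        qed
      next
        fix a b assume ab: "i + 1 \<le> a" "a < b" "b \<le> n"
        then show "p b < p a" using dec' e1 by auto
      qed
    next
      case False
      then have True2: "p (i+1) = n" using p by auto
      have e1: "e' \<le> i + 1"
      proof (rule ccontr)
        assume "\<not> e' \<le> i + 1"
        then have "p (i+1) < p (i+2)" using inc' by auto
        moreover have "p (i+2) \<le> n" using pin[of "i+2"] e' \<open>\<not> e' \<le> i + 1\<close> by simp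
        ultimately show False using True2 by simp
      qed
      have e2: "i \<le> e'"
      proof (rule ccontr)
        assume "\<not> i \<le> e'"
        then have "p (i+1) < p i" using dec'[rule_format, of i "i+1"] i by auto
        moreover have "p i \<le> n" using pin[of i] i by simp
        ultimately show False using True2 by simp
      qed
      show ?thesis
      proof (intro conjI allI impI)
        fix a b assume ab: "1 \<le> a" "a < b" "b \<le> i"
        then show "p a < p b" using inc' e2 by auto
      next
        fix a b assume ab: "i + 1 \<le> a" "a < b" "b \<le> n"
        show "p b < p a"
        proof (cases "e' + 1 \<le> a")
          case True then show ?thesis using dec' ab by auto
        next
          case False
          then have "a = i + 1" using ab e1 by simp
          moreover have "p b \<le> n" using pin[of b] ab by simp
          moreover have "p b \<noteq> p (i+1)" using pinj[of b "i+1"] ab \<open>a = i + 1\<close> by simp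
          ultimately show ?thesis using True2 by simp
        qed
      qed
    qed
    have "lp n i p"
      by (rule lp.intro) (use n2 i perm cyc incdec in auto)
    then show "p \<in> {p. lp n i p}" by simp
  qed
qed


definition WP :: "nat \<Rightarrow> nat \<Rightarrow> bool list set" where
  "WP n i = {w. length w = n \<and> count_list w True = i \<and> primitive_word w}"

definition Qset :: "nat \<Rightarrow> nat \<Rightarrow> bool list set set" where
  "Qset n i = (\<lambda>u. necklace (u @ u)) ` WP (n div 2) (i div 2)"

definition Tset :: "nat \<Rightarrow> nat \<Rightarrow> bool list set set" where
  "Tset n i = necklace ` WP n i \<union> (if even n \<and> (n + i) mod 4 = 2 then Qset n i else {})"

lemma phi_inj:
  "inj_on (\<lambda>p. necklace (lp.w n i p)) {p. lp n i p}"
proof (rule inj_onI)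
  fix p q assume p: "p \<in> {p. lp n i p}" and q: "q \<in> {p. lp n i p}"
    and eq: "necklace (lp.w n i p) = necklace (lp.w n i q)"
  have "two n i p q"
    using p q eq by (intro two.intro two_axioms.intro) auto
  then show "p = q" by (rule two.fg)
qed

lemma phi_sub:
  assumes "lp n i p"
  shows "necklace (lp.w n i p) \<in> Tset n i"
proof -
  interpret L: lp n i p by (rule assms)
  from L.struct show ?thesis
  proof
    assume "primitive_word L.w"
    then have "L.w \<in> WP n i" unfolding WP_def using L.w_count by simp
    then show ?thesis unfolding Tset_def by auto
  next
    assume "\<exists>u. L.w = u @ u \<and> primitive_word u \<and> odd (count_list u False) \<and> 2 * length u = n"
    then obtain u where u: "L.w = u @ u" "primitive_word u" "odd (count_list u False)" "2 * length u = n"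
      by blast
    have ct: "2 * count_list u True = i" using L.w_count u(1) by simp
    have tf: "count_list u True + count_list u False = length u" by (rule count_tf)
    have lu: "length u = n div 2" using u(4) by simp
    have cu: "count_list u True = i div 2" using ct by simp
    have cond: "even n \<and> (n + i) mod 4 = 2" using u(3,4) ct tf by presburger
    have "u \<in> WP (n div 2) (i div 2)" unfolding WP_def using lu cu u(2) by simp
    then have "necklace (u @ u) \<in> Qset n i" unfolding Qset_def by blast
    then show ?thesis unfolding Tset_def using cond u(1) by simp
  qed
qed

lemma arith_ie: "even (n::nat) \<Longrightarrow> (n + i) mod 4 = 2 \<Longrightarrow> even i"
  by presburger

lemma arith_odd:
  fixes n i L T F :: nat
  assumes "even n" "(n + i) mod 4 = 2" "L = n div 2" "T = i div 2" "T + F = L"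
  shows "odd F"
proof -
  obtain a where a: "n = 2 * a" using assms(1) by blast
  have "even i" using arith_ie assms(1,2) by blast
  then obtain b where b: "i = 2 * b" by blast
  have "L = a" "T = b" using a b assms(3,4) by simp_all
  then show ?thesis using assms(2,5) a b by presburger
qed

lemma phi_sup:
  assumes n2: "2 \<le> n" and N: "N \<in> Tset n i"
  shows "\<exists>p. lp n i p \<and> necklace (lp.w n i p) = N"
proof -
  from N consider (P) "N \<in> necklace ` WP n i" | (Q) "even n \<and> (n + i) mod 4 = 2" "N \<in> Qset n i"
    unfolding Tset_def by (auto split: if_splits)
  then show ?thesis
  proof cases
    case P
    then obtain w where w: "N = necklace w" "length w = n" "count_list w True = i" "primitive_word w"
      unfolding WP_def by auto
    have "cons n n 1 w"
    proof (rule cons.intro)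
      show "rotate n w = w" using w by simp
      show "a = b" if "a < n" "b < n" "rotate a w = rotate b w" for a b
        using rotate_inj_prim[OF w(4)] that w by simp
    qed (use w n2 in auto)
    from cons.cons_main[OF this] obtain p where
      "lp n (1 * count_list (take n w) True) p" "necklace (lp.w n (1 * count_list (take n w) True) p) = necklace w"
      by blast
    then show ?thesis using w by auto
  next
    case Q
    then obtain u where u: "N = necklace (u @ u)" "length u = n div 2" "count_list u True = i div 2"
      "primitive_word u" unfolding Qset_def WP_def by auto
    let ?L = "n div 2"
    have tf: "count_list u True + count_list u False = length u" by (rule count_tf)
    have ie: "even i" using Q(1) arith_ie by blast
    have odd: "odd (count_list u False)" using arith_odd[of n i "length u" "count_list u True" "count_list u False"] Q(1) u(2,3) tf by blast
    have "cons n ?L 2 (u @ u)"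
    proof (rule cons.intro)
      have "n = 2 * (n div 2)" using Q(1) by simp
      then show "length (u @ u) = n" using u(2) by simp
      show "n = 2 * ?L" using Q(1) by simp
      show "rotate ?L (u @ u) = u @ u" using u(2) rotate_append[of u u] by simp
      show "a = b" if ab: "a < ?L" "b < ?L" "rotate a (u @ u) = rotate b (u @ u)" for a b
      proof -
        have "rotate a u @ rotate a u = rotate b u @ rotate b u"
          using ab rotate_double[of a u] rotate_double[of b u] u(2) by simp
        then have "rotate a u = rotate b u" by simp
        then show ?thesis using rotate_inj_prim[OF u(4)] ab u(2) by simp
      qed
      show "odd (count_list (take ?L (u @ u)) False)" if "2 = 2" using odd u(2) by simp
    qed (use n2 in auto)
    from cons.cons_main[OF this] obtain p where
      p: "lp n (2 * count_list (take ?L (u @ u)) True) p"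
        "necklace (lp.w n (2 * count_list (take ?L (u @ u)) True) p) = necklace (u @ u)"
      by blast
    have "2 * count_list (take ?L (u @ u)) True = i" using u(2,3) ie by simp
    then show ?thesis using p u(1) by auto
  qed
qed

lemma card_LP:
  assumes "2 \<le> n"
  shows "card {p. lp n i p} = card (Tset n i)"
proof -
  have "bij_betw (\<lambda>p. necklace (lp.w n i p)) {p. lp n i p} (Tset n i)"
    unfolding bij_betw_def
  proof
    show "inj_on (\<lambda>p. necklace (lp.w n i p)) {p. lp n i p}" by (rule phi_inj)
    show "(\<lambda>p. necklace (lp.w n i p)) ` {p. lp n i p} = Tset n i"
      using phi_sub phi_sup[OF assms] by blast
  qed
  then show ?thesis by (rule bij_betw_same_card)
qed

lemma finite_WP: "finite (WP n i)"
proof -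
  have "WP n i \<subseteq> {xs. set xs \<subseteq> UNIV \<and> length xs = n}" unfolding WP_def by auto
  then show ?thesis using finite_lists_length_eq[of "UNIV :: bool set" n] finite_subset by auto
qed

lemma card_Q:
  assumes "2 \<le> n"
  shows "card (Qset n i) = L2 (n div 2) (i div 2)"
proof -
  have ne: "u \<noteq> []" if "u \<in> WP (n div 2) (i div 2)" for u
    using that assms unfolding WP_def by auto
  have "Qset n i = (\<lambda>M. (\<lambda>v. v @ v) ` M) ` (necklace ` WP (n div 2) (i div 2))"
    unfolding Qset_def using necklace_double ne by (auto simp: image_image)
  moreover have "inj_on (\<lambda>M. (\<lambda>v::bool list. v @ v) ` M) X" for X
    using inj_image_eq_iff[OF inj_dbl] by (auto simp: inj_on_def)
  ultimately have "card (Qset n i) = card (necklace ` WP (n div 2) (i div 2))"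
    by (simp add: card_image)
  also have "\<dots> = L2 (n div 2) (i div 2)" unfolding L2_def WP_def by simp
  finally show ?thesis .
qed

lemma PQ_disj:
  assumes "2 \<le> n"
  shows "necklace ` WP n i \<inter> Qset n i = {}"
proof (rule ccontr)
  assume "necklace ` WP n i \<inter> Qset n i \<noteq> {}"
  then obtain w u where w: "w \<in> WP n i" and u: "u \<in> WP (n div 2) (i div 2)"
    and eq: "necklace w = necklace (u @ u)" unfolding Qset_def by auto
  have "u \<noteq> []" using u assms unfolding WP_def by auto
  moreover have "w \<in> necklace (u @ u)" using eq unfolding necklace_def by (metis (mono_tags, lifting) mem_Collect_eq rotate0 id_apply)
  ultimately have "\<not> primitive_word w" by (rule nonprim_double)
  then show False using w unfolding WP_def by simp
qed

lemma card_T: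
  assumes "2 \<le> n"
  shows "card (Tset n i) =
    (if even n \<and> (n + i) mod 4 = 2 then L2 n i + L2 (n div 2) (i div 2) else L2 n i)"
proof -
  have cP: "card (necklace ` WP n i) = L2 n i" unfolding L2_def WP_def by simp
  have fP: "finite (necklace ` WP n i)" using finite_WP by simp
  have fQ: "finite (Qset n i)" unfolding Qset_def using finite_WP by simp
  show ?thesis
  proof (cases "even n \<and> (n + i) mod 4 = 2")
    case True
    then have "card (Tset n i) = card (necklace ` WP n i) + card (Qset n i)"
      unfolding Tset_def using card_Un_disjoint[OF fP fQ PQ_disj[OF assms]] by simp
    then show ?thesis using True cP card_Q[OF assms] by simp
  next
    case False
    then have "Tset n i = necklace ` WP n i" unfolding Tset_def by (simp only: if_False Un_empty_right)
    then show ?thesis using cP by (simp only: if_not_P[OF False])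
  qed
qed

theorem lemma4p2:
  fixes n i :: nat
  assumes "n \<ge> 1" and "1 \<le> i" and "i \<le> n - 1"
  shows "Lambda n i + Lambda n (i + 1) =
    (if even n \<and> (n + i) mod 4 = 2 then L2 n i + L2 (n div 2) (i div 2) else L2 n i)"
proof -
  have n2: "2 \<le> n" using assms by simp
  let ?A = "{p. cyclic_perm n p \<and> unimodal n p \<and> p i = n}"
  let ?B = "{p. cyclic_perm n p \<and> unimodal n p \<and> p (i+1) = n}"
  have fin: "finite {p. p permutes {1..n}}" by (rule finite_permutations) simp
  have fA: "finite ?A" by (rule finite_subset[OF _ fin]) (auto simp: cyclic_perm_def)
  have fB: "finite ?B" by (rule finite_subset[OF _ fin]) (auto simp: cyclic_perm_def)
  have disj: "?A \<inter> ?B = {}"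
  proof (rule ccontr)
    assume "?A \<inter> ?B \<noteq> {}"
    then obtain p where "p \<in> ?A" "p \<in> ?B" by blast
    then have "p permutes {1..n}" "p i = p (i + 1)" unfolding cyclic_perm_def by auto
    then show False using permutes_inj by (metis injD n_not_Suc_n Suc_eq_plus1)
  qed
  have "Lambda n i + Lambda n (i + 1) = card ?A + card ?B" unfolding Lambda_def by simp
  also have "\<dots> = card (?A \<union> ?B)" using card_Un_disjoint[OF fA fB disj] by simp
  also have "?A \<union> ?B = {p. lp n i p}" using lp_Lambda[OF n2 assms(2,3)] .
  also have "card \<dots> = card (Tset n i)" by (rule card_LP[OF n2])
  also have "\<dots> = (if even n \<and> (n + i) mod 4 = 2 then L2 n i + L2 (n div 2) (i div 2) else L2 n i)"
    by (rule card_T[OF n2])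
  finally show ?thesis .
qed


end
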